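(* The operators $A$ and $B$ have transposes $A^*,B^*$ with respect to $\langle\cdot,\cdot\rangle$, and $A^*B^*A^*=BAB$.
   Context: Let $\mathcal C$ be a strict monoidal category with tensor product $\boxtimes$ and unit object $\mathbb I$ which is an Ab-category (all Hom-sets are abelian groups, composition and $\boxtimes$ are biadditive) whose ground ring $\mathsf k=\operatorname{End}(\mathbb I)$ is a field; each $\operatorname{Hom}(V,W)$ is a $\mathsf k$-vector space via $kf=k\boxtimes f$, and $\boxtimes$ is $\mathsf k$-bilinear on morphisms. An object $V$ is simple if $\operatorname{End}(V)=\mathsf k\,\mathrm{Id}_V$; for such $V$ and $f\in\operatorname{End}(V)$, $\langle f\rangle\in\mathsf k$ denotes the scalar with $f=\langle f\rangle\mathrm{Id}_V$. For objects $V_i$ write $H^{ij}_k=\operatorname{Hom}(V_k,V_i\boxtimes V_j)$ and $H^k_{ij}=\operatorname{Hom}(V_i\boxtimes V_j,V_k)$. A $\Psi$-system in $\mathcal C$ consists of (1) a family of simple objects $\{V_i\}_{i\in I}$ with $\operatorname{Hom}(V_i,V_j)=0$ for $i\neq j$; (2) an involution $i\mapsto i^*$ of $I$; (3) morphisms $b_i:\mathbb I\to V_i\boxtimes V_{i^*}$, $d_i:V_i\boxtimes V_{i^*}\to\mathbb I$ ($i\in I$) with $(\mathrm{Id}_{V_i}\boxtimes d_{i^*})(b_i\boxtimes\mathrm{Id}_{V_i})=\mathrm{Id}_{V_i}$ and $(d_i\boxtimes\mathrm{Id}_{V_i})(\mathrm{Id}_{V_i}\boxtimes b_{i^*})=\mathrm{Id}_{V_i}$;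 (4) for all $i,j\in I$ such that $H^{ij}_k\neq0$ for some $k\in I$, the morphism $\mathrm{Id}_{V_i\boxtimes V_j}$ lies in the image of the linear map $\bigoplus_{k\in I}H^{ij}_k\otimes_{\mathsf k}H^k_{ij}\to\operatorname{End}(V_i\boxtimes V_j)$, $x\otimes y\mapsto x\circ y$. Fix a $\Psi$-system in $\mathcal C$. Let $\hat H=\bigoplus_{i,j,k\in I}H^k_{ij}$, $\check H=\bigoplus_{i,j,k\in I}H^{ij}_k$, $H=\hat H\oplus\check H$, and let $\pi^k_{ij}:H\to H^k_{ij}$, $\pi^{ij}_k:H\to H^{ij}_k$ be the projections. Define $A,B\in\operatorname{End}_{\mathsf k}(H)$ by $Ax=\sum_{i,j,k\in I}\big((\mathrm{Id}_{V_{i^*}}\boxtimes\pi^k_{ij}x)(b_{i^*}\boxtimes\mathrm{Id}_{V_j})+(d_{i^*}\boxtimes\mathrm{Id}_{V_j})(\mathrm{Id}_{V_{i^*}}\boxtimes\pi^{ij}_kx)\big)$, $Bx=\sum_{i,j,k\in I}\big((\pi^k_{ij}x\boxtimes\mathrm{Id}_{V_{j^*}})(\mathrm{Id}_{V_i}\boxtimes b_j)+(\mathrm{Id}_{V_i}\boxtimes d_j)(\pi^{ij}_kx\boxtimes\mathrm{Id}_{V_{j^*}})\big)$. Define the symmetric bilinear form on $H$: $\langle x,y\rangle=\sum_{i,j,k\in I}\big(\langle\pi^k_{ij}x\circ\pi^{ij}_ky\rangle+\langle\pi^k_{ij}y\circ\pi^{ij}_kx\rangle\big)$. A transpose of $f\in\operatorname{End}(H)$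 is an $f^*\in\operatorname{End}(H)$ with $\langle fx,y\rangle=\langle x,f^*y\rangle$ for all $x,y\in H$; it is unique when it exists. *)

theory Defs
  imports Main "HOL-Library.Function_Algebras" "HOL-Library.Product_Plus"
begin

text \<open>Data of a strict monoidal category whose morphisms are elements of an
  abelian group type; the hom-sets are subgroups. Composition of g after f is
  cmp g f; tno/tnm are the tensor product on objects/morphisms; unit is the unit object.\<close>

record ('o, 'm) mcat =
  hom  :: "'o \<Rightarrow> 'o \<Rightarrow> 'm set"
  cmp  :: "'m \<Rightarrow> 'm \<Rightarrow> 'm"
  idm  :: "'o \<Rightarrow> 'm"
  tno  :: "'o \<Rightarrow> 'o \<Rightarrow> 'o"
  tnm  :: "'m \<Rightarrow> 'm \<Rightarrow> 'm"
  unit :: "'o"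

abbreviation ground :: "('o, 'm) mcat \<Rightarrow> 'm set" where
  "ground C \<equiv> hom C (unit C) (unit C)"

definition smab_cat :: "('o, 'm::ab_group_add) mcat \<Rightarrow> bool" where
  "smab_cat C \<longleftrightarrow>
    \<comment> \<open>Ab-category: hom-sets are abelian groups\<close>
    (\<forall>U V. 0 \<in> hom C U V \<and> (\<forall>f\<in>hom C U V. \<forall>g\<in>hom C U V. f + g \<in> hom C U V)
           \<and> (\<forall>f\<in>hom C U V. - f \<in> hom C U V))
    \<comment> \<open>category axioms\<close>
  \<and> (\<forall>U V W f g. f \<in> hom C U V \<longrightarrow> g \<in> hom C V W \<longrightarrow> cmp C g f \<in> hom C U W)
  \<and> (\<forall>U. idm C U \<in> hom C U U)
  \<and> (\<forall>U V f. f \<in> hom C U V \<longrightarrow> cmp C (idm C V) f = f \<and> cmp C f (idm C U) = f)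
  \<and> (\<forall>U V W X f g h. f \<in> hom C U V \<longrightarrow> g \<in> hom C V W \<longrightarrow> h \<in> hom C W X \<longrightarrow>
        cmp C h (cmp C g f) = cmp C (cmp C h g) f)
    \<comment> \<open>composition is biadditive\<close>
  \<and> (\<forall>U V W f f' g. f \<in> hom C U V \<longrightarrow> f' \<in> hom C U V \<longrightarrow> g \<in> hom C V W \<longrightarrow>
        cmp C g (f + f') = cmp C g f + cmp C g f')
  \<and> (\<forall>U V W f g g'. f \<in> hom C U V \<longrightarrow> g \<in> hom C V W \<longrightarrow> g' \<in> hom C V W \<longrightarrow>
        cmp C (g + g') f = cmp C g f + cmp C g' f)
    \<comment> \<open>strict monoidal structure\<close>
  \<and> (\<forall>U V U' V' f g. f \<in> hom C U V \<longrightarrow> g \<in> hom C U' V' \<longrightarrow>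
        tnm C f g \<in> hom C (tno C U U') (tno C V V'))
  \<and> (\<forall>U V W. tno C (tno C U V) W = tno C U (tno C V W))
  \<and> (\<forall>U V U' V' U'' V'' f g h. f \<in> hom C U V \<longrightarrow> g \<in> hom C U' V' \<longrightarrow> h \<in> hom C U'' V'' \<longrightarrow>
        tnm C (tnm C f g) h = tnm C f (tnm C g h))
  \<and> (\<forall>U. tno C (unit C) U = U \<and> tno C U (unit C) = U)
  \<and> (\<forall>U V f. f \<in> hom C U V \<longrightarrow> tnm C (idm C (unit C)) f = f \<and> tnm C f (idm C (unit C)) = f)
  \<and> (\<forall>U V. tnm C (idm C U) (idm C V) = idm C (tno C U V))
  \<and> (\<forall>U V W U' V' W' f g f' g'. f \<in> hom C U V \<longrightarrow> g \<in> hom C V W \<longrightarrow>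
        f' \<in> hom C U' V' \<longrightarrow> g' \<in> hom C V' W' \<longrightarrow>
        cmp C (tnm C g g') (tnm C f f') = tnm C (cmp C g f) (cmp C g' f'))
    \<comment> \<open>tensor product is biadditive\<close>
  \<and> (\<forall>U V U' V' f f' g. f \<in> hom C U V \<longrightarrow> f' \<in> hom C U V \<longrightarrow> g \<in> hom C U' V' \<longrightarrow>
        tnm C (f + f') g = tnm C f g + tnm C f' g \<and> tnm C g (f + f') = tnm C g f + tnm C g f')
    \<comment> \<open>the ground ring End(I) is a field\<close>
  \<and> idm C (unit C) \<noteq> 0
  \<and> (\<forall>a\<in>ground C. \<forall>c\<in>ground C. cmp C a c = cmp C c a)
  \<and> (\<forall>a\<in>ground C. a \<noteq> 0 \<longrightarrow> (\<exists>c\<in>ground C. cmp C c a = idm C (unit C)))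
    \<comment> \<open>the tensor product is k-bilinear, where k f = k \<boxtimes> f\<close>
  \<and> (\<forall>c\<in>ground C. \<forall>U V U' V' f g. f \<in> hom C U V \<longrightarrow> g \<in> hom C U' V' \<longrightarrow>
        tnm C (tnm C c f) g = tnm C c (tnm C f g) \<and> tnm C f (tnm C c g) = tnm C c (tnm C f g))"

definition simple_obj :: "('o, 'm::ab_group_add) mcat \<Rightarrow> 'o \<Rightarrow> bool" where
  "simple_obj C X \<longleftrightarrow> idm C X \<noteq> 0 \<and>
     hom C X X = {tnm C c (idm C X) | c. c \<in> ground C}"

definition scal :: "('o, 'm::ab_group_add) mcat \<Rightarrow> 'o \<Rightarrow> 'm \<Rightarrow> 'm" where
  "scal C X f = (THE c. c \<in> ground C \<and> f = tnm C c (idm C X))"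

definition psi_system :: "('o, 'm::ab_group_add) mcat \<Rightarrow> ('i \<Rightarrow> 'o) \<Rightarrow> ('i \<Rightarrow> 'i)
    \<Rightarrow> ('i \<Rightarrow> 'm) \<Rightarrow> ('i \<Rightarrow> 'm) \<Rightarrow> bool" where
  "psi_system C V st bb dd \<longleftrightarrow>
     (\<forall>i. simple_obj C (V i))
   \<and> (\<forall>i j. i \<noteq> j \<longrightarrow> hom C (V i) (V j) = {0})
   \<and> (\<forall>i. st (st i) = i)
   \<and> (\<forall>i. bb i \<in> hom C (unit C) (tno C (V i) (V (st i)))
          \<and> dd i \<in> hom C (tno C (V i) (V (st i))) (unit C))
   \<and> (\<forall>i. cmp C (tnm C (idm C (V i)) (dd (st i))) (tnm C (bb i) (idm C (V i))) = idm C (V i)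
          \<and> cmp C (tnm C (dd i) (idm C (V i))) (tnm C (idm C (V i)) (bb (st i))) = idm C (V i))
   \<and> (\<forall>i j. (\<exists>k. hom C (V k) (tno C (V i) (V j)) \<noteq> {0}) \<longrightarrow>
        (\<exists>ts :: ('i \<times> 'm \<times> 'm) list.
           (\<forall>(k, x, y) \<in> set ts. x \<in> hom C (V k) (tno C (V i) (V j))
                              \<and> y \<in> hom C (tno C (V i) (V j)) (V k))
         \<and> sum_list (map (\<lambda>(k, x, y). cmp C x y) ts) = idm C (tno C (V i) (V j))))"

text \<open>An element of H is a pair (hat part, check part) of finitely supported families:
  the hat part at (i,j,k) lies in Hom(V_i \<boxtimes> V_j, V_k), the check part at (i,j,k) in
  Hom(V_k, V_i \<boxtimes> V_j).\<close>
type_synonym ('i, 'm) hsp = "(('i \<times> 'i \<times> 'i) \<Rightarrow> 'm) \<times> (('i \<times> 'i \<times> 'i) \<Rightarrow> 'm)"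

definition Hspace :: "('o, 'm::ab_group_add) mcat \<Rightarrow> ('i \<Rightarrow> 'o) \<Rightarrow> ('i, 'm) hsp set" where
  "Hspace C V = {x. (\<forall>i j k. fst x (i, j, k) \<in> hom C (tno C (V i) (V j)) (V k)
                          \<and> snd x (i, j, k) \<in> hom C (V k) (tno C (V i) (V j)))
                  \<and> finite {t. fst x t \<noteq> 0} \<and> finite {t. snd x t \<noteq> 0}}"

definition inj_hat :: "'i \<times> 'i \<times> 'i \<Rightarrow> 'm::ab_group_add \<Rightarrow> ('i, 'm) hsp" where
  "inj_hat t f = ((\<lambda>s. if s = t then f else 0), (\<lambda>s. 0))"

definition inj_chk :: "'i \<times> 'i \<times> 'i \<Rightarrow> 'm::ab_group_add \<Rightarrow> ('i, 'm) hsp" where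
  "inj_chk t f = ((\<lambda>s. 0), (\<lambda>s. if s = t then f else 0))"

text \<open>The operators A and B (sums over i,j,k; terms with vanishing projection are zero
  and are omitted).\<close>
definition opA :: "('o, 'm::ab_group_add) mcat \<Rightarrow> ('i \<Rightarrow> 'o) \<Rightarrow> ('i \<Rightarrow> 'i)
    \<Rightarrow> ('i \<Rightarrow> 'm) \<Rightarrow> ('i \<Rightarrow> 'm) \<Rightarrow> ('i, 'm) hsp \<Rightarrow> ('i, 'm) hsp" where
  "opA C V st bb dd x =
     (\<Sum>(i, j, k) \<in> {t. fst x t \<noteq> 0}.
        inj_chk (st i, k, j)
          (cmp C (tnm C (idm C (V (st i))) (fst x (i, j, k))) (tnm C (bb (st i)) (idm C (V j)))))
   + (\<Sum>(i, j, k) \<in> {t. snd x t \<noteq> 0}.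
        inj_hat (st i, k, j)
          (cmp C (tnm C (dd (st i)) (idm C (V j))) (tnm C (idm C (V (st i))) (snd x (i, j, k)))))"

definition opB :: "('o, 'm::ab_group_add) mcat \<Rightarrow> ('i \<Rightarrow> 'o) \<Rightarrow> ('i \<Rightarrow> 'i)
    \<Rightarrow> ('i \<Rightarrow> 'm) \<Rightarrow> ('i \<Rightarrow> 'm) \<Rightarrow> ('i, 'm) hsp \<Rightarrow> ('i, 'm) hsp" where
  "opB C V st bb dd x =
     (\<Sum>(i, j, k) \<in> {t. fst x t \<noteq> 0}.
        inj_chk (k, st j, i)
          (cmp C (tnm C (fst x (i, j, k)) (idm C (V (st j)))) (tnm C (idm C (V i)) (bb j))))
   + (\<Sum>(i, j, k) \<in> {t. snd x t \<noteq> 0}.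
        inj_hat (k, st j, i)
          (cmp C (tnm C (idm C (V i)) (dd j)) (tnm C (snd x (i, j, k)) (idm C (V (st j))))))"

definition pform :: "('o, 'm::ab_group_add) mcat \<Rightarrow> ('i \<Rightarrow> 'o)
    \<Rightarrow> ('i, 'm) hsp \<Rightarrow> ('i, 'm) hsp \<Rightarrow> 'm" where
  "pform C V x y =
     (\<Sum>(i, j, k) \<in> {t. fst x t \<noteq> 0 \<or> snd x t \<noteq> 0 \<or> fst y t \<noteq> 0 \<or> snd y t \<noteq> 0}.
        scal C (V k) (cmp C (fst x (i, j, k)) (snd y (i, j, k)))
      + scal C (V k) (cmp C (fst y (i, j, k)) (snd x (i, j, k))))"

definition hsmul :: "('o, 'm::ab_group_add) mcat \<Rightarrow> 'm \<Rightarrow> ('i, 'm) hsp \<Rightarrow> ('i, 'm) hsp" where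
  "hsmul C c x = ((\<lambda>t. tnm C c (fst x t)), (\<lambda>t. tnm C c (snd x t)))"

definition hlinear :: "('o, 'm::ab_group_add) mcat \<Rightarrow> ('i \<Rightarrow> 'o)
    \<Rightarrow> (('i, 'm) hsp \<Rightarrow> ('i, 'm) hsp) \<Rightarrow> bool" where
  "hlinear C V f \<longleftrightarrow>
     (\<forall>x\<in>Hspace C V. f x \<in> Hspace C V)
   \<and> (\<forall>x\<in>Hspace C V. \<forall>y\<in>Hspace C V. f (x + y) = f x + f y)
   \<and> (\<forall>c\<in>ground C. \<forall>x\<in>Hspace C V. f (hsmul C c x) = hsmul C c (f x))"

definition is_transpose :: "('o, 'm::ab_group_add) mcat \<Rightarrow> ('i \<Rightarrow> 'o)
    \<Rightarrow> (('i, 'm) hsp \<Rightarrow> ('i, 'm) hsp) \<Rightarrow> (('i, 'm) hsp \<Rightarrow> ('i, 'm) hsp) \<Rightarrow> bool" where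
  "is_transpose C V f g \<longleftrightarrow> hlinear C V g \<and>
     (\<forall>x\<in>Hspace C V. \<forall>y\<in>Hspace C V. pform C V (f x) y = pform C V x (g y))"

end

theory Submission
  imports Defs
begin

definition wt :: "('o, 'm::ab_group_add) mcat \<Rightarrow> 'o \<times> 'o \<times> 'm \<Rightarrow> bool" where
  "wt C F \<longleftrightarrow> snd (snd F) \<in> hom C (fst F) (fst (snd F))"
definition cT :: "('o, 'm::ab_group_add) mcat \<Rightarrow> 'o \<times> 'o \<times> 'm \<Rightarrow> 'o \<times> 'o \<times> 'm \<Rightarrow> 'o \<times> 'o \<times> 'm" where
  "cT C G F = (fst F, fst (snd G), cmp C (snd (snd G)) (snd (snd F)))"
definition tT :: "('o, 'm::ab_group_add) mcat \<Rightarrow> 'o \<times> 'o \<times> 'm \<Rightarrow> 'o \<times> 'o \<times> 'm \<Rightarrow> 'o \<times> 'o \<times> 'm" where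
  "tT C F G = (tno C (fst F) (fst G), tno C (fst (snd F)) (fst (snd G)), tnm C (snd (snd F)) (snd (snd G)))"
definition iT :: "('o, 'm::ab_group_add) mcat \<Rightarrow> 'o \<Rightarrow> 'o \<times> 'o \<times> 'm" where
  "iT C X = (X, X, idm C X)"

lemma cT_simps[simp]: "fst (cT C G F) = fst F" "fst (snd (cT C G F)) = fst (snd G)"
  "snd (snd (cT C G F)) = cmp C (snd (snd G)) (snd (snd F))" by (simp_all add: cT_def)
lemma tT_simps[simp]: "fst (tT C F G) = tno C (fst F) (fst G)" "fst (snd (tT C F G)) = tno C (fst (snd F)) (fst (snd G))"
  "snd (snd (tT C F G)) = tnm C (snd (snd F)) (snd (snd G))" by (simp_all add: tT_def)
lemma iT_simps[simp]: "fst (iT C X) = X" "fst (snd (iT C X)) = X" "snd (snd (iT C X)) = idm C X"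
  by (simp_all add: iT_def)
lemma triple_eq: "fst F = fst G \<Longrightarrow> fst (snd F) = fst (snd G) \<Longrightarrow> snd (snd F) = snd (snd G) \<Longrightarrow> F = G"
  by (simp add: prod_eq_iff)

locale psi =
  fixes C :: "('o, 'm::ab_group_add) mcat"
    and V :: "'i \<Rightarrow> 'o" and st :: "'i \<Rightarrow> 'i" and bb dd :: "'i \<Rightarrow> 'm"
  assumes cat: "smab_cat C" and ps: "psi_system C V st bb dd"
begin

abbreviation I where "I \<equiv> unit C"

lemmas ax1 = cat[unfolded smab_cat_def, THEN conjunct1]
lemmas ax2 = cat[unfolded smab_cat_def, THEN conjunct2, THEN conjunct1]
lemmas ax3 = cat[unfolded smab_cat_def, THEN conjunct2, THEN conjunct2, THEN conjunct1]
lemmas ax4 = cat[unfolded smab_cat_def, THEN conjunct2, THEN conjunct2, THEN conjunct2, THEN conjunct1]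
lemmas ax5 = cat[unfolded smab_cat_def, THEN conjunct2, THEN conjunct2, THEN conjunct2, THEN conjunct2, THEN conjunct1]
lemmas ax6 = cat[unfolded smab_cat_def, THEN conjunct2, THEN conjunct2, THEN conjunct2, THEN conjunct2, THEN conjunct2, THEN conjunct1]
lemmas ax7 = cat[unfolded smab_cat_def, THEN conjunct2, THEN conjunct2, THEN conjunct2, THEN conjunct2, THEN conjunct2, THEN conjunct2, THEN conjunct1]
lemmas ax8 = cat[unfolded smab_cat_def, THEN conjunct2, THEN conjunct2, THEN conjunct2, THEN conjunct2, THEN conjunct2, THEN conjunct2, THEN conjunct2, THEN conjunct1]
lemmas ax9 = cat[unfolded smab_cat_def, THEN conjunct2, THEN conjunct2, THEN conjunct2, THEN conjunct2, THEN conjunct2, THEN conjunct2, THEN conjunct2, THEN conjunct2, THEN conjunct1]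
lemmas ax10 = cat[unfolded smab_cat_def, THEN conjunct2, THEN conjunct2, THEN conjunct2, THEN conjunct2, THEN conjunct2, THEN conjunct2, THEN conjunct2, THEN conjunct2, THEN conjunct2, THEN conjunct1]
lemmas ax11 = cat[unfolded smab_cat_def, THEN conjunct2, THEN conjunct2, THEN conjunct2, THEN conjunct2, THEN conjunct2, THEN conjunct2, THEN conjunct2, THEN conjunct2, THEN conjunct2, THEN conjunct2, THEN conjunct1]
lemmas ax12 = cat[unfolded smab_cat_def, THEN conjunct2, THEN conjunct2, THEN conjunct2, THEN conjunct2, THEN conjunct2, THEN conjunct2, THEN conjunct2, THEN conjunct2, THEN conjunct2, THEN conjunct2, THEN conjunct2, THEN conjunct1]
lemmas ax13 = cat[unfolded smab_cat_def, THEN conjunct2, THEN conjunct2, THEN conjunct2, THEN conjunct2, THEN conjunct2, THEN conjunct2, THEN conjunct2, THEN conjunct2, THEN conjunct2, THEN conjunct2, THEN conjunct2, THEN conjunct2, THEN conjunct1]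
lemmas ax14 = cat[unfolded smab_cat_def, THEN conjunct2, THEN conjunct2, THEN conjunct2, THEN conjunct2, THEN conjunct2, THEN conjunct2, THEN conjunct2, THEN conjunct2, THEN conjunct2, THEN conjunct2, THEN conjunct2, THEN conjunct2, THEN conjunct2, THEN conjunct1]
lemmas ax15 = cat[unfolded smab_cat_def, THEN conjunct2, THEN conjunct2, THEN conjunct2, THEN conjunct2, THEN conjunct2, THEN conjunct2, THEN conjunct2, THEN conjunct2, THEN conjunct2, THEN conjunct2, THEN conjunct2, THEN conjunct2, THEN conjunct2, THEN conjunct2, THEN conjunct1]
lemmas ax16 = cat[unfolded smab_cat_def, THEN conjunct2, THEN conjunct2, THEN conjunct2, THEN conjunct2, THEN conjunct2, THEN conjunct2, THEN conjunct2, THEN conjunct2, THEN conjunct2, THEN conjunct2, THEN conjunct2, THEN conjunct2, THEN conjunct2, THEN conjunct2, THEN conjunct2, THEN conjunct1]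
lemmas ax17 = cat[unfolded smab_cat_def, THEN conjunct2, THEN conjunct2, THEN conjunct2, THEN conjunct2, THEN conjunct2, THEN conjunct2, THEN conjunct2, THEN conjunct2, THEN conjunct2, THEN conjunct2, THEN conjunct2, THEN conjunct2, THEN conjunct2, THEN conjunct2, THEN conjunct2, THEN conjunct2, THEN conjunct1]
lemmas ax18 = cat[unfolded smab_cat_def, THEN conjunct2, THEN conjunct2, THEN conjunct2, THEN conjunct2, THEN conjunct2, THEN conjunct2, THEN conjunct2, THEN conjunct2, THEN conjunct2, THEN conjunct2, THEN conjunct2, THEN conjunct2, THEN conjunct2, THEN conjunct2, THEN conjunct2, THEN conjunct2, THEN conjunct2, THEN conjunct1]
lemmas ax19 = cat[unfolded smab_cat_def, THEN conjunct2, THEN conjunct2, THEN conjunct2, THEN conjunct2, THEN conjunct2, THEN conjunct2, THEN conjunct2, THEN conjunct2, THEN conjunct2, THEN conjunct2, THEN conjunct2, THEN conjunct2, THEN conjunct2, THEN conjunct2, THEN conjunct2, THEN conjunct2, THEN conjunct2, THEN conjunct2]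

lemma hom0[simp,intro]: "0 \<in> hom C U W" using ax1 by blast
lemma hom_add[intro]: "f \<in> hom C U W \<Longrightarrow> g \<in> hom C U W \<Longrightarrow> f + g \<in> hom C U W"
  using ax1 by blast
lemma hom_uminus[intro]: "f \<in> hom C U W \<Longrightarrow> - f \<in> hom C U W"
  using ax1 by blast
lemma hom_diff[intro]: "f \<in> hom C U W \<Longrightarrow> g \<in> hom C U W \<Longrightarrow> f - g \<in> hom C U W"
  unfolding diff_conv_add_uminus by (intro hom_add hom_uminus)
lemma hom_sum[intro]: "(\<And>x. x \<in> S \<Longrightarrow> f x \<in> hom C U W) \<Longrightarrow> sum f S \<in> hom C U W"
  by (induction S rule: infinite_finite_induct) auto
lemma hom_sum_list[intro]: "(\<And>x. x \<in> set xs \<Longrightarrow> f x \<in> hom C U W) \<Longrightarrow> sum_list (map f xs) \<in> hom C U W"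
  by (induction xs) auto

lemma cmp_hom[intro]: "f \<in> hom C U W \<Longrightarrow> g \<in> hom C W X \<Longrightarrow> cmp C g f \<in> hom C U X"
  using ax2 by blast
lemma idm_hom[simp,intro]: "idm C U \<in> hom C U U"
  using ax3 by blast
lemma cmp_idl: "f \<in> hom C U W \<Longrightarrow> cmp C (idm C W) f = f"
  using ax4 by blast
lemma cmp_idr: "f \<in> hom C U W \<Longrightarrow> cmp C f (idm C U) = f"
  using ax4 by blast
lemma cmp_assoc: "f \<in> hom C U W \<Longrightarrow> g \<in> hom C W X \<Longrightarrow> h \<in> hom C X Y \<Longrightarrow>
   cmp C h (cmp C g f) = cmp C (cmp C h g) f"
  using ax5 by blast
lemma cmp_addr: "f \<in> hom C U W \<Longrightarrow> f' \<in> hom C U W \<Longrightarrow> g \<in> hom C W X \<Longrightarrow>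
   cmp C g (f + f') = cmp C g f + cmp C g f'"
  using ax6 by blast
lemma cmp_addl: "f \<in> hom C U W \<Longrightarrow> g \<in> hom C W X \<Longrightarrow> g' \<in> hom C W X \<Longrightarrow>
   cmp C (g + g') f = cmp C g f + cmp C g' f"
  using ax7 by blast
lemma cmp_0r: "g \<in> hom C W X \<Longrightarrow> cmp C g 0 = 0"
  using cmp_addr[of 0 W W 0 g X] by simp
lemma cmp_0l: "f \<in> hom C U W \<Longrightarrow> cmp C 0 f = 0"
  using cmp_addl[of f U W 0 W 0] by simp
lemma cmp_00[simp]: "cmp C 0 0 = 0"
  using cmp_0r[of 0 I I] by simp
lemma cmp_sumr: "(\<And>x. x \<in> S \<Longrightarrow> f x \<in> hom C U W) \<Longrightarrow> g \<in> hom C W X \<Longrightarrow>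
   cmp C g (sum f S) = (\<Sum>x\<in>S. cmp C g (f x))"
proof (induction S rule: infinite_finite_induct)
  case (insert x F) then have "sum f F \<in> hom C U W" by (intro hom_sum) auto
  with insert show ?case by (simp add: cmp_addr[of "f x" U W "sum f F" g X])
qed (auto simp: cmp_0r)
lemma cmp_suml: "f \<in> hom C U W \<Longrightarrow> (\<And>x. x \<in> S \<Longrightarrow> g x \<in> hom C W X) \<Longrightarrow>
   cmp C (sum g S) f = (\<Sum>x\<in>S. cmp C (g x) f)"
proof (induction S rule: infinite_finite_induct)
  case (insert x F) then have "sum g F \<in> hom C W X" by (intro hom_sum) auto
  with insert show ?case by (simp add: cmp_addl[of f U W "g x" X "sum g F"])
qed (auto simp: cmp_0l)
lemma cmp_sumlistr: "(\<And>x. x \<in> set xs \<Longrightarrow> f x \<in> hom C U W) \<Longrightarrow> g \<in> hom C W X \<Longrightarrow>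
   cmp C g (sum_list (map f xs)) = sum_list (map (\<lambda>x. cmp C g (f x)) xs)"
proof (induction xs)
  case (Cons x xs) then have "sum_list (map f xs) \<in> hom C U W" by (intro hom_sum_list) auto
  with Cons show ?case by (simp add: cmp_addr[of "f x" U W "sum_list (map f xs)" g X])
qed (auto simp: cmp_0r)
lemma cmp_sumlistl: "f \<in> hom C U W \<Longrightarrow> (\<And>x. x \<in> set xs \<Longrightarrow> g x \<in> hom C W X) \<Longrightarrow>
   cmp C (sum_list (map g xs)) f = sum_list (map (\<lambda>x. cmp C (g x) f) xs)"
proof (induction xs)
  case (Cons x xs) then have "sum_list (map g xs) \<in> hom C W X" by (intro hom_sum_list) auto
  with Cons show ?case by (simp add: cmp_addl[of f U W "g x" X "sum_list (map g xs)"])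
qed (auto simp: cmp_0l)
lemma cmp_minusr: "f \<in> hom C U W \<Longrightarrow> g \<in> hom C W X \<Longrightarrow> cmp C g (- f) = - cmp C g f"
  using cmp_addr[of "- f" U W f g X] cmp_0r[of g W X] by (simp add: hom_uminus eq_neg_iff_add_eq_0)
lemma cmp_minusl: "f \<in> hom C U W \<Longrightarrow> g \<in> hom C W X \<Longrightarrow> cmp C (- g) f = - cmp C g f"
  using cmp_addl[of f U W "- g" X g] cmp_0l[of f U W] by (simp add: hom_uminus eq_neg_iff_add_eq_0)
lemma cmp_diffr: "f \<in> hom C U W \<Longrightarrow> f' \<in> hom C U W \<Longrightarrow> g \<in> hom C W X \<Longrightarrow>
   cmp C g (f - f') = cmp C g f - cmp C g f'"
  using cmp_addr[of f U W "- f'" g X] cmp_minusr[of f' U W g X] by (simp add: hom_uminus)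
lemma cmp_diffl: "f \<in> hom C U W \<Longrightarrow> g \<in> hom C W X \<Longrightarrow> g' \<in> hom C W X \<Longrightarrow>
   cmp C (g - g') f = cmp C g f - cmp C g' f"
  using cmp_addl[of f U W g X "- g'"] cmp_minusl[of f U W g' X] by (simp add: hom_uminus)

lemma tnm_hom[intro]: "f \<in> hom C U W \<Longrightarrow> g \<in> hom C U' W' \<Longrightarrow> tnm C f g \<in> hom C (tno C U U') (tno C W W')"
  using ax8 by blast
lemma tno_assoc[simp]: "tno C (tno C U W) X = tno C U (tno C W X)"
  using ax9 by blast
lemma tno_unit[simp]: "tno C I U = U" "tno C U I = U"
  using ax11 by blast+
lemma tnm_assoc: "f \<in> hom C U W \<Longrightarrow> g \<in> hom C U' W' \<Longrightarrow> h \<in> hom C U'' W'' \<Longrightarrow>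
   tnm C (tnm C f g) h = tnm C f (tnm C g h)"
  using ax10 by blast
lemma tnm_unitl: "f \<in> hom C U W \<Longrightarrow> tnm C (idm C I) f = f"
  using ax12 by blast
lemma tnm_unitr: "f \<in> hom C U W \<Longrightarrow> tnm C f (idm C I) = f"
  using ax12 by blast
lemma tnm_id[simp]: "tnm C (idm C U) (idm C W) = idm C (tno C U W)"
  using ax13 by blast
lemma interchange: "f \<in> hom C U W \<Longrightarrow> g \<in> hom C W X \<Longrightarrow> f' \<in> hom C U' W' \<Longrightarrow> g' \<in> hom C W' X' \<Longrightarrow>
   cmp C (tnm C g g') (tnm C f f') = tnm C (cmp C g f) (cmp C g' f')"
  using ax14 by blast
lemma tnm_addl: "f \<in> hom C U W \<Longrightarrow> f' \<in> hom C U W \<Longrightarrow> g \<in> hom C U' W' \<Longrightarrow>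
   tnm C (f + f') g = tnm C f g + tnm C f' g"
  using ax15 by blast
lemma tnm_addr: "f \<in> hom C U W \<Longrightarrow> f' \<in> hom C U W \<Longrightarrow> g \<in> hom C U' W' \<Longrightarrow>
   tnm C g (f + f') = tnm C g f + tnm C g f'"
  using ax15 by blast
lemma tnm_0l: "g \<in> hom C U' W' \<Longrightarrow> tnm C 0 g = 0"
  using tnm_addl[of 0 I I 0 g] by simp
lemma tnm_0r: "g \<in> hom C U' W' \<Longrightarrow> tnm C g 0 = 0"
  using tnm_addr[of 0 I I 0 g] by simp
lemma tnm_minusl: "f \<in> hom C U W \<Longrightarrow> g \<in> hom C U' W' \<Longrightarrow> tnm C (- f) g = - tnm C f g"
  using tnm_addl[of "- f" U W f g] tnm_0l[of g] by (simp add: hom_uminus eq_neg_iff_add_eq_0)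
lemma tnm_minusr: "f \<in> hom C U W \<Longrightarrow> g \<in> hom C U' W' \<Longrightarrow> tnm C g (- f) = - tnm C g f"
  using tnm_addr[of "- f" U W f g] tnm_0r[of g] by (simp add: hom_uminus eq_neg_iff_add_eq_0)
lemma tnm_suml: "(\<And>x. x \<in> S \<Longrightarrow> f x \<in> hom C U W) \<Longrightarrow> g \<in> hom C U' W' \<Longrightarrow>
   tnm C (sum f S) g = (\<Sum>x\<in>S. tnm C (f x) g)"
proof (induction S rule: infinite_finite_induct)
  case (insert x F) then have "sum f F \<in> hom C U W" by (intro hom_sum) auto
  with insert show ?case by (simp add: tnm_addl[of "f x" U W "sum f F" g])
qed (auto simp: tnm_0l)
lemma tnm_sumr: "(\<And>x. x \<in> S \<Longrightarrow> f x \<in> hom C U W) \<Longrightarrow> g \<in> hom C U' W' \<Longrightarrow>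
   tnm C g (sum f S) = (\<Sum>x\<in>S. tnm C g (f x))"
proof (induction S rule: infinite_finite_induct)
  case (insert x F) then have "sum f F \<in> hom C U W" by (intro hom_sum) auto
  with insert show ?case by (simp add: tnm_addr[of "f x" U W "sum f F" g])
qed (auto simp: tnm_0r)
lemma tnm_sumlistl: "(\<And>x. x \<in> set xs \<Longrightarrow> f x \<in> hom C U W) \<Longrightarrow> g \<in> hom C U' W' \<Longrightarrow>
   tnm C (sum_list (map f xs)) g = sum_list (map (\<lambda>x. tnm C (f x) g) xs)"
proof (induction xs)
  case (Cons x xs) then have "sum_list (map f xs) \<in> hom C U W" by (intro hom_sum_list) auto
  with Cons show ?case by (simp add: tnm_addl[of "f x" U W "sum_list (map f xs)" g])
qed (auto simp: tnm_0l)

lemma one_ne0: "idm C I \<noteq> 0" using ax16 by blast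
lemma ground_comm: "a \<in> hom C I I \<Longrightarrow> c \<in> hom C I I \<Longrightarrow> cmp C a c = cmp C c a"
  using ax17 by blast
lemma ground_inv: "a \<in> hom C I I \<Longrightarrow> a \<noteq> 0 \<Longrightarrow> \<exists>c\<in>hom C I I. cmp C c a = idm C I"
  using ax18 by blast
lemma kbil: "c \<in> hom C I I \<Longrightarrow> f \<in> hom C U W \<Longrightarrow> g \<in> hom C U' W' \<Longrightarrow>
   tnm C (tnm C c f) g = tnm C c (tnm C f g) \<and> tnm C f (tnm C c g) = tnm C c (tnm C f g)"
  using ax19 by blast

lemma wt_cT[simp]: "wt C G \<Longrightarrow> wt C F \<Longrightarrow> fst G = fst (snd F) \<Longrightarrow> wt C (cT C G F)"
  unfolding wt_def by (auto intro: cmp_hom)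
lemma wt_tT[simp]: "wt C G \<Longrightarrow> wt C F \<Longrightarrow> wt C (tT C F G)"
  unfolding wt_def by (auto intro: tnm_hom)
lemma wt_iT[simp]: "wt C (iT C X)" unfolding wt_def by simp
lemma wt_trip[simp]: "wt C (U, W, f) = (f \<in> hom C U W)" unfolding wt_def by simp

lemma cT_assoc: "wt C F \<Longrightarrow> wt C G \<Longrightarrow> wt C H \<Longrightarrow> fst G = fst (snd F) \<Longrightarrow> fst H = fst (snd G) \<Longrightarrow>
   cT C H (cT C G F) = cT C (cT C H G) F"
  unfolding wt_def by (rule triple_eq) (auto intro: cmp_assoc)
lemma cT_idl: "wt C F \<Longrightarrow> X = fst (snd F) \<Longrightarrow> cT C (iT C X) F = F"
  unfolding wt_def by (rule triple_eq) (auto intro: cmp_idl)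
lemma cT_idr: "wt C F \<Longrightarrow> X = fst F \<Longrightarrow> cT C F (iT C X) = F"
  unfolding wt_def by (rule triple_eq) (auto intro: cmp_idr)
lemma tT_assoc: "wt C F \<Longrightarrow> wt C G \<Longrightarrow> wt C H \<Longrightarrow> tT C (tT C F G) H = tT C F (tT C G H)"
  unfolding wt_def by (rule triple_eq) (auto intro: tnm_assoc)
lemma tT_id: "tT C (iT C X) (iT C Y) = iT C (tno C X Y)"
  by (rule triple_eq) auto
lemma tT_unitl: "wt C F \<Longrightarrow> tT C (iT C I) F = F"
  unfolding wt_def by (rule triple_eq) (auto intro: tnm_unitl)
lemma tT_unitr: "wt C F \<Longrightarrow> tT C F (iT C I) = F"
  unfolding wt_def by (rule triple_eq) (auto intro: tnm_unitr)
lemma xchg: "wt C F \<Longrightarrow> wt C G \<Longrightarrow> wt C F' \<Longrightarrow> wt C G' \<Longrightarrow> fst G = fst (snd F) \<Longrightarrow> fst G' = fst (snd F') \<Longrightarrow>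
   cT C (tT C G G') (tT C F F') = tT C (cT C G F) (cT C G' F')"
  unfolding wt_def by (rule triple_eq) (auto intro: interchange)

lemma tT_cT_r: "wt C F \<Longrightarrow> wt C G \<Longrightarrow> fst G = fst (snd F) \<Longrightarrow>
   tT C (iT C X) (cT C G F) = cT C (tT C (iT C X) G) (tT C (iT C X) F)"
  by (subst xchg) (simp_all add: cT_idl)
lemma tT_cT_l: "wt C F \<Longrightarrow> wt C G \<Longrightarrow> fst G = fst (snd F) \<Longrightarrow>
   tT C (cT C G F) (iT C X) = cT C (tT C G (iT C X)) (tT C F (iT C X))"
  by (subst xchg) (simp_all add: cT_idl)
lemma slide1: "wt C F \<Longrightarrow> wt C G \<Longrightarrow> tT C F G = cT C (tT C (iT C (fst (snd F))) G) (tT C F (iT C (fst G)))"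
  by (subst xchg) (simp_all add: cT_idl cT_idr)
lemma slide2: "wt C F \<Longrightarrow> wt C G \<Longrightarrow> tT C F G = cT C (tT C F (iT C (fst (snd G)))) (tT C (iT C (fst F)) G)"
  by (subst xchg) (simp_all add: cT_idl cT_idr)

lemmas px1 = ps[unfolded psi_system_def, THEN conjunct1]
lemmas px2 = ps[unfolded psi_system_def, THEN conjunct2, THEN conjunct1]
lemmas px3 = ps[unfolded psi_system_def, THEN conjunct2, THEN conjunct2, THEN conjunct1]
lemmas px4 = ps[unfolded psi_system_def, THEN conjunct2, THEN conjunct2, THEN conjunct2, THEN conjunct1]
lemmas px5 = ps[unfolded psi_system_def, THEN conjunct2, THEN conjunct2, THEN conjunct2, THEN conjunct2, THEN conjunct1]
lemmas px6 = ps[unfolded psi_system_def, THEN conjunct2, THEN conjunct2, THEN conjunct2, THEN conjunct2, THEN conjunct2]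

lemma simple: "simple_obj C (V i)" using px1 by blast
lemma homV0: "i \<noteq> j \<Longrightarrow> hom C (V i) (V j) = {0}" using px2 by blast
lemma st_st[simp]: "st (st i) = i" using px3 by blast
lemma bb_hom[simp,intro]: "bb i \<in> hom C I (tno C (V i) (V (st i)))" using px4 by blast
lemma dd_hom[simp,intro]: "dd i \<in> hom C (tno C (V i) (V (st i))) I" using px4 by blast
lemma zig_raw: "cmp C (tnm C (idm C (V i)) (dd (st i))) (tnm C (bb i) (idm C (V i))) = idm C (V i)"
   "cmp C (tnm C (dd i) (idm C (V i))) (tnm C (idm C (V i)) (bb (st i))) = idm C (V i)"
  using px5 by blast+
lemma decomp: "\<exists>k. hom C (V k) (tno C (V i) (V j)) \<noteq> {0} \<Longrightarrow>
  \<exists>ts :: ('i \<times> 'm \<times> 'm) list.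
           (\<forall>(k, x, y) \<in> set ts. x \<in> hom C (V k) (tno C (V i) (V j))
                              \<and> y \<in> hom C (tno C (V i) (V j)) (V k))
         \<and> sum_list (map (\<lambda>(k, x, y). cmp C x y) ts) = idm C (tno C (V i) (V j))"
  using px6 by blast

definition "bbT i = (I, tno C (V i) (V (st i)), bb i)"
definition "ddT i = (tno C (V i) (V (st i)), I, dd i)"
lemma bbT_simps[simp]: "fst (bbT i) = I" "fst (snd (bbT i)) = tno C (V i) (V (st i))" "snd (snd (bbT i)) = bb i"
  "wt C (bbT i)" by (simp_all add: bbT_def)
lemma ddT_simps[simp]: "fst (ddT i) = tno C (V i) (V (st i))" "fst (snd (ddT i)) = I" "snd (snd (ddT i)) = dd i"
  "wt C (ddT i)" by (simp_all add: ddT_def)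
lemma zig1: "cT C (tT C (iT C (V i)) (ddT (st i))) (tT C (bbT i) (iT C (V i))) = iT C (V i)"
  by (rule triple_eq) (simp_all add: zig_raw)
lemma zig2: "cT C (tT C (ddT i) (iT C (V i))) (tT C (iT C (V i)) (bbT (st i))) = iT C (V i)"
  by (rule triple_eq) (simp_all add: zig_raw)

definition "AhT i j X = cT C (tT C (iT C (V (st i))) X) (tT C (bbT (st i)) (iT C (V j)))"
definition "AcT i j W = cT C (tT C (ddT (st i)) (iT C (V j))) (tT C (iT C (V (st i))) W)"
definition "BhT i j X = cT C (tT C X (iT C (V (st j)))) (tT C (iT C (V i)) (bbT j))"
definition "BcT i j W = cT C (tT C (iT C (V i)) (ddT j)) (tT C W (iT C (V (st j))))"

lemma AcA_tr:
  assumes X: "X = (tno C (V i) (V j), V k, x)" "x \<in> hom C (tno C (V i) (V j)) (V k)"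
  shows "AcT (st i) k (AhT i j X) = X"
proof -
  have wX: "wt C X" using X by simp
  have "AcT (st i) k (AhT i j X) = cT C (tT C (ddT i) (iT C (V k)))
     (tT C (iT C (V i)) (cT C (tT C (iT C (V (st i))) X) (tT C (bbT (st i)) (iT C (V j)))))"
    by (simp add: AcT_def AhT_def)
  also have "\<dots> = cT C (tT C (ddT i) (iT C (V k)))
     (cT C (tT C (iT C (V i)) (tT C (iT C (V (st i))) X)) (tT C (iT C (V i)) (tT C (bbT (st i)) (iT C (V j)))))"
    using X by (subst tT_cT_r) simp_all
  also have "\<dots> = cT C (tT C (ddT i) (iT C (V k)))
     (cT C (tT C (iT C (tno C (V i) (V (st i)))) X) (tT C (tT C (iT C (V i)) (bbT (st i))) (iT C (V j))))"
    using X by (simp add: tT_assoc[symmetric] tT_id)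
  also have "\<dots> = cT C (cT C (tT C (ddT i) (iT C (V k))) (tT C (iT C (tno C (V i) (V (st i)))) X))
      (tT C (tT C (iT C (V i)) (bbT (st i))) (iT C (V j)))"
    using X by (subst cT_assoc) simp_all
  also have "cT C (tT C (ddT i) (iT C (V k))) (tT C (iT C (tno C (V i) (V (st i)))) X) = tT C (ddT i) X"
    using X by (subst xchg) (simp_all add: cT_idl cT_idr)
  also have "tT C (ddT i) X = cT C X (tT C (ddT i) (iT C (tno C (V i) (V j))))"
    using X by (subst slide1) (simp_all add: tT_unitl)
  also have "cT C (cT C X (tT C (ddT i) (iT C (tno C (V i) (V j))))) (tT C (tT C (iT C (V i)) (bbT (st i))) (iT C (V j)))
     = cT C X (cT C (tT C (ddT i) (iT C (tno C (V i) (V j)))) (tT C (tT C (iT C (V i)) (bbT (st i))) (iT C (V j))))"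
    using X by (subst cT_assoc) simp_all
  also have "tT C (ddT i) (iT C (tno C (V i) (V j))) = tT C (tT C (ddT i) (iT C (V i))) (iT C (V j))"
    by (simp add: tT_assoc tT_id)
  also have "cT C (tT C (tT C (ddT i) (iT C (V i))) (iT C (V j))) (tT C (tT C (iT C (V i)) (bbT (st i))) (iT C (V j)))
     = tT C (iT C (V i)) (iT C (V j))"
    by (subst xchg) (simp_all add: zig2 cT_idl)
  also have "cT C X (tT C (iT C (V i)) (iT C (V j))) = X"
    using X by (simp add: tT_id cT_idr)
  finally show ?thesis .
qed


section \<open>scalars\<close>

lemma sc_hom[intro]: "c \<in> hom C I I \<Longrightarrow> f \<in> hom C U W \<Longrightarrow> tnm C c f \<in> hom C U W"
  using tnm_hom[of c I I f U W] by simp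
lemma gr_tnm: "c \<in> hom C I I \<Longrightarrow> d \<in> hom C I I \<Longrightarrow> tnm C c d = cmp C c d"
  using interchange[of "idm C I" I I c I d I I "idm C I" I] by (simp add: cmp_idl cmp_idr tnm_unitl tnm_unitr)
lemma sc_comm: "c \<in> hom C I I \<Longrightarrow> f \<in> hom C U W \<Longrightarrow> tnm C f c = tnm C c f"
  using kbil[of c f U W "idm C I" I I] by (simp add: tnm_unitr)
lemma cmp_scr: "c \<in> hom C I I \<Longrightarrow> f \<in> hom C U W \<Longrightarrow> g \<in> hom C W X \<Longrightarrow>
   cmp C g (tnm C c f) = tnm C c (cmp C g f)"
  using interchange[of c I I "idm C I" I f U W g X] tnm_unitl[of g W X] by (simp add: cmp_idl)
lemma cmp_scl: "c \<in> hom C I I \<Longrightarrow> f \<in> hom C U W \<Longrightarrow> g \<in> hom C W X \<Longrightarrow>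
   cmp C (tnm C c g) f = tnm C c (cmp C g f)"
  using interchange[of "idm C I" I I c I f U W g X] tnm_unitl[of f U W] by (simp add: cmp_idr)
lemma sc_sc: "c \<in> hom C I I \<Longrightarrow> d \<in> hom C I I \<Longrightarrow> f \<in> hom C U W \<Longrightarrow>
   tnm C c (tnm C d f) = tnm C (cmp C c d) f"
  using tnm_assoc[of c I I d I I f U W] gr_tnm[of c d] by simp
lemma tnm_scl: "c \<in> hom C I I \<Longrightarrow> f \<in> hom C U W \<Longrightarrow> g \<in> hom C U' W' \<Longrightarrow>
   tnm C (tnm C c f) g = tnm C c (tnm C f g)" using kbil by blast
lemma tnm_scr: "c \<in> hom C I I \<Longrightarrow> f \<in> hom C U W \<Longrightarrow> g \<in> hom C U' W' \<Longrightarrow>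
   tnm C f (tnm C c g) = tnm C c (tnm C f g)" using kbil by blast

lemma sc_inj: assumes c: "c \<in> hom C I I" and z: "tnm C c (idm C (V k)) = 0" shows "c = 0"
proof (rule ccontr)
  assume "c \<noteq> 0"
  then obtain c' where c': "c' \<in> hom C I I" "cmp C c' c = idm C I" using ground_inv c by blast
  have "tnm C c' (tnm C c (idm C (V k))) = idm C (V k)"
    using c c' by (simp add: sc_sc[of c' c "idm C (V k)" "V k" "V k"] tnm_unitl[of "idm C (V k)" "V k" "V k"])
  then have "idm C (V k) = 0" using z tnm_0r[of c' I I] c' by simp
  then show False using simple[of k] unfolding simple_obj_def by simp
qed

lemma sc_inj2: assumes "c \<in> hom C I I" "d \<in> hom C I I" "tnm C c (idm C (V k)) = tnm C d (idm C (V k))"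
  shows "c = d"
proof -
  have "tnm C (c - d) (idm C (V k)) = 0"
    using assms tnm_addl[of c I I "- d" "idm C (V k)" "V k" "V k"] tnm_minusl[of d I I "idm C (V k)" "V k" "V k"]
    by (simp add: hom_uminus)
  then have "c - d = 0" using sc_inj[of "c - d" k] assms by (simp add: hom_diff)
  then show ?thesis by simp
qed

lemma scal_of[simp]: assumes "c \<in> hom C I I" shows "scal C (V k) (tnm C c (idm C (V k))) = c"
  unfolding scal_def
proof (rule the_equality)
  show "c \<in> hom C I I \<and> tnm C c (idm C (V k)) = tnm C c (idm C (V k))" using assms by simp
  fix d assume "d \<in> hom C I I \<and> tnm C c (idm C (V k)) = tnm C d (idm C (V k))"
  then show "d = c" using sc_inj2[of d c k] assms by simp
qed

lemma endV: assumes "f \<in> hom C (V k) (V k)"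
  shows "scal C (V k) f \<in> hom C I I" "tnm C (scal C (V k) f) (idm C (V k)) = f"
proof -
  obtain c where c: "c \<in> hom C I I" "f = tnm C c (idm C (V k))"
    using assms simple[of k] unfolding simple_obj_def by blast
  then show "scal C (V k) f \<in> hom C I I" "tnm C (scal C (V k) f) (idm C (V k)) = f" by simp_all
qed

lemma scal_add: assumes "f \<in> hom C (V k) (V k)" "g \<in> hom C (V k) (V k)"
  shows "scal C (V k) (f + g) = scal C (V k) f + scal C (V k) g"
proof -
  have "f + g = tnm C (scal C (V k) f + scal C (V k) g) (idm C (V k))"
    using endV[OF assms(1)] endV[OF assms(2)] by (simp add: tnm_addl[of _ I I _ "idm C (V k)" "V k" "V k"])
  then show ?thesis using endV[OF assms(1)] endV[OF assms(2)] by (simp add: hom_add)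
qed
lemma scal_0[simp]: "scal C (V k) 0 = 0"
  using scal_of[of 0 k] tnm_0l[of "idm C (V k)" "V k" "V k"] by simp
lemma scal_smul: assumes "c \<in> hom C I I" "f \<in> hom C (V k) (V k)"
  shows "scal C (V k) (tnm C c f) = cmp C c (scal C (V k) f)"
proof -
  have "tnm C c f = tnm C (cmp C c (scal C (V k) f)) (idm C (V k))"
    using endV[OF assms(2)] assms by (metis sc_sc idm_hom)
  then show ?thesis using endV[OF assms(2)] assms by (simp add: cmp_hom)
qed
lemma scal_sum_list: "(\<And>x. x \<in> set xs \<Longrightarrow> f x \<in> hom C (V k) (V k)) \<Longrightarrow>
   scal C (V k) (sum_list (map f xs)) = sum_list (map (\<lambda>x. scal C (V k) (f x)) xs)"
proof (induction xs)
  case (Cons x xs) then have "sum_list (map f xs) \<in> hom C (V k) (V k)" by (intro hom_sum_list) auto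
  with Cons show ?case by (simp add: scal_add)
qed simp


definition "Ah i j x = cmp C (tnm C (idm C (V (st i))) x) (tnm C (bb (st i)) (idm C (V j)))"
definition "Ac i j w = cmp C (tnm C (dd (st i)) (idm C (V j))) (tnm C (idm C (V (st i))) w)"
definition "Bh i j x = cmp C (tnm C x (idm C (V (st j)))) (tnm C (idm C (V i)) (bb j))"
definition "Bc i j w = cmp C (tnm C (idm C (V i)) (dd j)) (tnm C w (idm C (V (st j))))"

lemma AhT_eq[simp]: "AhT i j (U, W, x) = (V j, tno C (V (st i)) W, Ah i j x)"
  by (simp add: AhT_def Ah_def cT_def tT_def iT_def bbT_def)
lemma AcT_eq[simp]: "AcT i j (U, W, x) = (tno C (V (st i)) U, V j, Ac i j x)"
  by (simp add: AcT_def Ac_def cT_def tT_def iT_def ddT_def)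
lemma BhT_eq[simp]: "BhT i j (U, W, x) = (V i, tno C W (V (st j)), Bh i j x)"
  by (simp add: BhT_def Bh_def cT_def tT_def iT_def bbT_def)
lemma BcT_eq[simp]: "BcT i j (U, W, x) = (tno C U (V (st j)), V i, Bc i j x)"
  by (simp add: BcT_def Bc_def cT_def tT_def iT_def ddT_def)

lemma Ah_hom[intro]: "x \<in> hom C (tno C (V i) (V j)) W \<Longrightarrow> Ah i j x \<in> hom C (V j) (tno C (V (st i)) W)"
proof -
  assume a: "x \<in> hom C (tno C (V i) (V j)) W"
  have "wt C (AhT i j (tno C (V i) (V j), W, x))" using a unfolding AhT_def by simp
  then show ?thesis by simp
qed
lemma Ac_hom[intro]: "x \<in> hom C U (tno C (V i) (V j)) \<Longrightarrow> Ac i j x \<in> hom C (tno C (V (st i)) U) (V j)"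
proof -
  assume a: "x \<in> hom C U (tno C (V i) (V j))"
  have "wt C (AcT i j (U, tno C (V i) (V j), x))" using a unfolding AcT_def by simp
  then show ?thesis by simp
qed
lemma Bh_hom[intro]: "x \<in> hom C (tno C (V i) (V j)) W \<Longrightarrow> Bh i j x \<in> hom C (V i) (tno C W (V (st j)))"
proof -
  assume a: "x \<in> hom C (tno C (V i) (V j)) W"
  have "wt C (BhT i j (tno C (V i) (V j), W, x))" using a unfolding BhT_def by simp
  then show ?thesis by simp
qed
lemma Bc_hom[intro]: "x \<in> hom C U (tno C (V i) (V j)) \<Longrightarrow> Bc i j x \<in> hom C (tno C U (V (st j))) (V i)"
proof -
  assume a: "x \<in> hom C U (tno C (V i) (V j))"
  have "wt C (BcT i j (U, tno C (V i) (V j), x))" using a unfolding BcT_def by simp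
  then show ?thesis by simp
qed

lemma AcA: assumes "x \<in> hom C (tno C (V i) (V j)) (V k)" shows "Ac (st i) k (Ah i j x) = x"
  using AcA_tr[of "(tno C (V i) (V j), V k, x)" i j k x] assms by simp


lemma Ah_lin: assumes x: "x \<in> hom C (tno C (V i) (V j)) W" and x': "x' \<in> hom C (tno C (V i) (V j)) W"
  and c: "c \<in> hom C I I"
  shows "Ah i j (x + x') = Ah i j x + Ah i j x'" "Ah i j (tnm C c x) = tnm C c (Ah i j x)" "Ah i j 0 = 0"
proof -
  note f = tnm_hom[OF bb_hom idm_hom, of "st i" "V j", simplified]
  show "Ah i j (x + x') = Ah i j x + Ah i j x'"
    unfolding Ah_def using tnm_addr[OF x x' idm_hom] cmp_addl[OF f tnm_hom[OF idm_hom x] tnm_hom[OF idm_hom x']] by simp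
  show "Ah i j (tnm C c x) = tnm C c (Ah i j x)"
    unfolding Ah_def using tnm_scr[OF c idm_hom x] cmp_scl[OF c f tnm_hom[OF idm_hom x]] by simp
  show "Ah i j 0 = 0"
    unfolding Ah_def using tnm_0r[OF idm_hom] cmp_0l[OF f] by simp
qed
lemma Ac_lin: assumes x: "x \<in> hom C U (tno C (V i) (V j))" and x': "x' \<in> hom C U (tno C (V i) (V j))"
  and c: "c \<in> hom C I I"
  shows "Ac i j (x + x') = Ac i j x + Ac i j x'" "Ac i j (tnm C c x) = tnm C c (Ac i j x)" "Ac i j 0 = 0"
proof -
  note f = tnm_hom[OF dd_hom idm_hom, of "st i" "V j", simplified]
  show "Ac i j (x + x') = Ac i j x + Ac i j x'"
    unfolding Ac_def using tnm_addr[OF x x' idm_hom] cmp_addr[OF tnm_hom[OF idm_hom x] tnm_hom[OF idm_hom x'] f] by simp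
  show "Ac i j (tnm C c x) = tnm C c (Ac i j x)"
    unfolding Ac_def using tnm_scr[OF c idm_hom x] cmp_scr[OF c tnm_hom[OF idm_hom x] f] by simp
  show "Ac i j 0 = 0"
    unfolding Ac_def using tnm_0r[OF idm_hom] cmp_0r[OF f] by simp
qed
lemma Bh_lin: assumes x: "x \<in> hom C (tno C (V i) (V j)) W" and x': "x' \<in> hom C (tno C (V i) (V j)) W"
  and c: "c \<in> hom C I I"
  shows "Bh i j (x + x') = Bh i j x + Bh i j x'" "Bh i j (tnm C c x) = tnm C c (Bh i j x)" "Bh i j 0 = 0"
proof -
  note f = tnm_hom[OF idm_hom bb_hom, of "V i" j, simplified]
  show "Bh i j (x + x') = Bh i j x + Bh i j x'"
    unfolding Bh_def using tnm_addl[OF x x' idm_hom] cmp_addl[OF f tnm_hom[OF x idm_hom[of "V (st j)"], simplified] tnm_hom[OF x' idm_hom[of "V (st j)"], simplified]] by simp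
  show "Bh i j (tnm C c x) = tnm C c (Bh i j x)"
    unfolding Bh_def using tnm_scl[OF c x idm_hom] cmp_scl[OF c f tnm_hom[OF x idm_hom[of "V (st j)"], simplified]] by simp
  show "Bh i j 0 = 0"
    unfolding Bh_def using tnm_0l[OF idm_hom] cmp_0l[OF f] by simp
qed
lemma Bc_lin: assumes x: "x \<in> hom C U (tno C (V i) (V j))" and x': "x' \<in> hom C U (tno C (V i) (V j))"
  and c: "c \<in> hom C I I"
  shows "Bc i j (x + x') = Bc i j x + Bc i j x'" "Bc i j (tnm C c x) = tnm C c (Bc i j x)" "Bc i j 0 = 0"
proof -
  note f = tnm_hom[OF idm_hom dd_hom, of "V i" j, simplified]
  show "Bc i j (x + x') = Bc i j x + Bc i j x'"
    unfolding Bc_def using tnm_addl[OF x x' idm_hom] cmp_addr[OF tnm_hom[OF x idm_hom[of "V (st j)"], simplified] tnm_hom[OF x' idm_hom[of "V (st j)"], simplified] f] by simp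
  show "Bc i j (tnm C c x) = tnm C c (Bc i j x)"
    unfolding Bc_def using tnm_scl[OF c x idm_hom] cmp_scr[OF c tnm_hom[OF x idm_hom[of "V (st j)"], simplified] f] by simp
  show "Bc i j 0 = 0"
    unfolding Bc_def using tnm_0l[OF idm_hom] cmp_0r[OF f] by simp
qed


section \<open>decompositions\<close>

definition "goodts i j ts \<longleftrightarrow> (\<forall>(k, x, y) \<in> set ts. x \<in> hom C (V k) (tno C (V i) (V j))
                              \<and> y \<in> hom C (tno C (V i) (V j)) (V k))
         \<and> sum_list (map (\<lambda>(k, x, y). cmp C x y) ts) = idm C (tno C (V i) (V j))"
definition "dec i j = (if \<exists>k. hom C (V k) (tno C (V i) (V j)) \<noteq> {0} then SOME ts. goodts i j ts else [])"

lemma dec_good: assumes ex: "\<exists>k. hom C (V k) (tno C (V i) (V j)) \<noteq> {0}" shows "goodts i j (dec i j)"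
proof -
  have "goodts i j (SOME ts. goodts i j ts)"
  proof (rule someI_ex)
    show "\<exists>ts. goodts i j ts" unfolding goodts_def by (rule decomp[OF ex])
  qed
  moreover have "dec i j = (SOME ts. goodts i j ts)" using ex unfolding dec_def by (rule if_P)
  ultimately show ?thesis by simp
qed
lemma dec_typ: "(k, x, y) \<in> set (dec i j) \<Longrightarrow> x \<in> hom C (V k) (tno C (V i) (V j)) \<and> y \<in> hom C (tno C (V i) (V j)) (V k)"
proof -
  assume a: "(k, x, y) \<in> set (dec i j)"
  have ex: "\<exists>k. hom C (V k) (tno C (V i) (V j)) \<noteq> {0}"
  proof (rule ccontr)
    assume "\<not> ?thesis" then have "dec i j = []" unfolding dec_def by (rule if_not_P)
    then show False using a by simp
  qed
  have "goodts i j (dec i j)" by (rule dec_good[OF ex])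
  then show ?thesis using a unfolding goodts_def by fast
qed
lemma dec_id: "\<exists>k. hom C (V k) (tno C (V i) (V j)) \<noteq> {0} \<Longrightarrow>
   sum_list (map (\<lambda>(k, x, y). cmp C x y) (dec i j)) = idm C (tno C (V i) (V j))"
  using dec_good unfolding goodts_def by fast

lemma sum_list_zero: "(\<And>x. x \<in> set xs \<Longrightarrow> f x = 0) \<Longrightarrow> sum_list (map f xs) = (0::'a::monoid_add)"
  by (induction xs) auto
lemma sum_list_cong: "(\<And>x. x \<in> set xs \<Longrightarrow> f x = g x) \<Longrightarrow> sum_list (map f xs) = sum_list (map g xs)"
  by (induction xs) auto
lemma sum_list_nz: "sum_list (map f xs) \<noteq> (0::'a::monoid_add) \<Longrightarrow> \<exists>x\<in>set xs. f x \<noteq> 0"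
proof (rule ccontr)
  assume a: "sum_list (map f xs) \<noteq> 0" "\<not> (\<exists>x\<in>set xs. f x \<noteq> 0)"
  then have "sum_list (map f xs) = 0" by (intro sum_list_zero) auto
  then show False using a by simp
qed

lemma hom_VV_0: "k \<noteq> k' \<Longrightarrow> f \<in> hom C (V k) (V k') \<Longrightarrow> f = 0"
  using homV0 by blast

lemma chk_expand:
  assumes w: "w \<in> hom C (V k) (tno C (V i) (V j))"
  shows "w = sum_list (map (\<lambda>(k', x, y). if k' = k then tnm C (scal C (V k) (cmp C y w)) x else 0) (dec i j))"
proof (cases "w = 0")
  case True
  have "sum_list (map (\<lambda>(k', x, y). if k' = k then tnm C (scal C (V k) (cmp C y w)) x else 0) (dec i j)) = 0"
  proof (rule sum_list_zero)
    fix t assume t: "t \<in> set (dec i j)"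
    obtain k' x y where [simp]: "t = (k', x, y)" by (cases t) auto
    from dec_typ[of k' x y i j] t have "y \<in> hom C (tno C (V i) (V j)) (V k')" "x \<in> hom C (V k') (tno C (V i) (V j))" by auto
    then show "(case t of (k', x, y) \<Rightarrow> if k' = k then tnm C (scal C (V k) (cmp C y w)) x else 0) = 0"
      using True by (simp add: cmp_0r tnm_0l)
  qed
  then show ?thesis using True by simp
next
  case False
  then have ex: "\<exists>k. hom C (V k) (tno C (V i) (V j)) \<noteq> {0}" using w by blast
  have "w = cmp C (idm C (tno C (V i) (V j))) w" using w by (simp add: cmp_idl)
  also have "\<dots> = cmp C (sum_list (map (\<lambda>(k, x, y). cmp C x y) (dec i j))) w" using dec_id[OF ex] by simp
  also have "\<dots> = sum_list (map (\<lambda>t. cmp C ((\<lambda>(k, x, y). cmp C x y) t) w) (dec i j))"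
  proof (rule cmp_sumlistl[OF w])
    fix t assume t: "t \<in> set (dec i j)"
    obtain k' x y where [simp]: "t = (k', x, y)" by (cases t) auto
    from dec_typ[of k' x y i j] t have y: "y \<in> hom C (tno C (V i) (V j)) (V k')" and x: "x \<in> hom C (V k') (tno C (V i) (V j))" by auto
    show "(\<lambda>(k, x, y). cmp C x y) t \<in> hom C (tno C (V i) (V j)) (tno C (V i) (V j))" using cmp_hom[OF y x] by simp
  qed
  also have "\<dots> = sum_list (map (\<lambda>(k', x, y). if k' = k then tnm C (scal C (V k) (cmp C y w)) x else 0) (dec i j))"
  proof (rule sum_list_cong)
    fix t assume t: "t \<in> set (dec i j)"
    obtain k' x y where [simp]: "t = (k', x, y)" by (cases t) auto
    from dec_typ[of k' x y i j] t have y: "y \<in> hom C (tno C (V i) (V j)) (V k')" and x: "x \<in> hom C (V k') (tno C (V i) (V j))" by auto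
    have "cmp C (cmp C x y) w = cmp C x (cmp C y w)" using cmp_assoc[OF w y x] by simp
    moreover have yw: "cmp C y w \<in> hom C (V k) (V k')" using w y by blast
    ultimately show "cmp C ((\<lambda>(k, x, y). cmp C x y) t) w = (case t of (k', x, y) \<Rightarrow> if k' = k then tnm C (scal C (V k) (cmp C y w)) x else 0)"
    proof (cases "k' = k")
      case True
      then have "cmp C y w = tnm C (scal C (V k) (cmp C y w)) (idm C (V k))" using endV yw by simp
      then have "cmp C x (cmp C y w) = tnm C (scal C (V k) (cmp C y w)) x"
        using cmp_scr[of "scal C (V k) (cmp C y w)" "idm C (V k)" "V k" "V k" x] x True endV(1) yw by (simp add: cmp_idr)
      then show ?thesis using True \<open>cmp C (cmp C x y) w = cmp C x (cmp C y w)\<close> by simp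
    next
      case False
      then have "cmp C y w = 0" using hom_VV_0[OF _ yw] by blast
      then show ?thesis using False \<open>cmp C (cmp C x y) w = cmp C x (cmp C y w)\<close> x by (simp add: cmp_0r)
    qed
  qed
  finally show ?thesis .
qed


lemma hat_nz:
  assumes h: "h \<in> hom C (tno C (V i) (V j)) (V k)" and nz: "h \<noteq> 0"
  shows "\<exists>k'. hom C (V k') (tno C (V i) (V j)) \<noteq> {0}"
proof -
  define g where "g = Ah i j h"
  have g: "g \<in> hom C (V j) (tno C (V (st i)) (V k))" unfolding g_def using h by blast
  have "g \<noteq> 0"
  proof
    assume "g = 0"
    then have "Ac (st i) k g = 0" using Ac_lin(3)[OF hom0 hom0 hom0] by simp
    then show False using AcA[OF h] nz unfolding g_def by simp
  qed
  then have ex: "\<exists>k'. hom C (V k') (tno C (V (st i)) (V k)) \<noteq> {0}" using g by blast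
  have "g = cmp C (idm C (tno C (V (st i)) (V k))) g" using g by (simp add: cmp_idl)
  also have "\<dots> = cmp C (sum_list (map (\<lambda>(k, x, y). cmp C x y) (dec (st i) k))) g" using dec_id[OF ex] by simp
  also have "\<dots> = sum_list (map (\<lambda>t. cmp C ((\<lambda>(k, x, y). cmp C x y) t) g) (dec (st i) k))"
  proof (rule cmp_sumlistl[OF g])
    fix t assume t: "t \<in> set (dec (st i) k)"
    obtain k' x y where [simp]: "t = (k', x, y)" by (cases t) auto
    from dec_typ[of k' x y "st i" k] t have y: "y \<in> hom C (tno C (V (st i)) (V k)) (V k')" and x: "x \<in> hom C (V k') (tno C (V (st i)) (V k))" by auto
    show "(\<lambda>(k, x, y). cmp C x y) t \<in> hom C (tno C (V (st i)) (V k)) (tno C (V (st i)) (V k))" using cmp_hom[OF y x] by simp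
  qed
  finally have "sum_list (map (\<lambda>t. cmp C ((\<lambda>(k, x, y). cmp C x y) t) g) (dec (st i) k)) \<noteq> 0" using \<open>g \<noteq> 0\<close> by simp
  then obtain t where t: "t \<in> set (dec (st i) k)" and tnz: "cmp C ((\<lambda>(k, x, y). cmp C x y) t) g \<noteq> 0"
    using sum_list_nz by blast
  obtain k' x y where [simp]: "t = (k', x, y)" by (cases t) auto
  from dec_typ[of k' x y "st i" k] t have y: "y \<in> hom C (tno C (V (st i)) (V k)) (V k')" and x: "x \<in> hom C (V k') (tno C (V (st i)) (V k))" by auto
  have "cmp C x (cmp C y g) \<noteq> 0" using tnz cmp_assoc[OF g y x] by simp
  then have ygnz: "cmp C y g \<noteq> 0" using x by (auto simp: cmp_0r)
  have yg: "cmp C y g \<in> hom C (V j) (V k')" using g y by blast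
  have kj: "k' = j" using hom_VV_0[OF _ yg] ygnz by blast
  have ynz: "y \<noteq> 0" using ygnz g by (auto simp: cmp_0l)
  have y2: "y \<in> hom C (tno C (V (st i)) (V k)) (V j)" using y kj by simp
  have "Ah (st i) k y \<in> hom C (V k) (tno C (V i) (V j))" using Ah_hom[OF y2] by simp
  moreover have "Ah (st i) k y \<noteq> 0"
  proof
    assume "Ah (st i) k y = 0"
    then have "Ac (st (st i)) j (Ah (st i) k y) = 0" using Ac_lin(3)[OF hom0 hom0 hom0] by simp
    then show False using AcA[OF y2] ynz by simp
  qed
  ultimately show ?thesis by blast
qed

lemma hat_expand:
  assumes h: "h \<in> hom C (tno C (V i) (V j)) (V k)"
  shows "h = sum_list (map (\<lambda>(k', x, y). if k' = k then tnm C (scal C (V k) (cmp C h x)) y else 0) (dec i j))"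
proof (cases "h = 0")
  case True
  have "sum_list (map (\<lambda>(k', x, y). if k' = k then tnm C (scal C (V k) (cmp C h x)) y else 0) (dec i j)) = 0"
  proof (rule sum_list_zero)
    fix t assume t: "t \<in> set (dec i j)"
    obtain k' x y where [simp]: "t = (k', x, y)" by (cases t) auto
    from dec_typ[of k' x y i j] t have "y \<in> hom C (tno C (V i) (V j)) (V k')" "x \<in> hom C (V k') (tno C (V i) (V j))" by auto
    then show "(case t of (k', x, y) \<Rightarrow> if k' = k then tnm C (scal C (V k) (cmp C h x)) y else 0) = 0"
      using True by (simp add: cmp_0l tnm_0l)
  qed
  then show ?thesis using True by simp
next
  case False
  then have ex: "\<exists>k. hom C (V k) (tno C (V i) (V j)) \<noteq> {0}" using hat_nz h by blast
  have "h = cmp C h (idm C (tno C (V i) (V j)))" using h by (simp add: cmp_idr)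
  also have "\<dots> = cmp C h (sum_list (map (\<lambda>(k, x, y). cmp C x y) (dec i j)))" using dec_id[OF ex] by simp
  also have "\<dots> = sum_list (map (\<lambda>t. cmp C h ((\<lambda>(k, x, y). cmp C x y) t)) (dec i j))"
  proof (rule cmp_sumlistr[OF _ h])
    fix t assume t: "t \<in> set (dec i j)"
    obtain k' x y where [simp]: "t = (k', x, y)" by (cases t) auto
    from dec_typ[of k' x y i j] t have y: "y \<in> hom C (tno C (V i) (V j)) (V k')" and x: "x \<in> hom C (V k') (tno C (V i) (V j))" by auto
    show "(\<lambda>(k, x, y). cmp C x y) t \<in> hom C (tno C (V i) (V j)) (tno C (V i) (V j))" using cmp_hom[OF y x] by simp
  qed
  also have "\<dots> = sum_list (map (\<lambda>(k', x, y). if k' = k then tnm C (scal C (V k) (cmp C h x)) y else 0) (dec i j))"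
  proof (rule sum_list_cong)
    fix t assume t: "t \<in> set (dec i j)"
    obtain k' x y where [simp]: "t = (k', x, y)" by (cases t) auto
    from dec_typ[of k' x y i j] t have y: "y \<in> hom C (tno C (V i) (V j)) (V k')" and x: "x \<in> hom C (V k') (tno C (V i) (V j))" by auto
    have as: "cmp C h (cmp C x y) = cmp C (cmp C h x) y" using cmp_assoc[OF y x h] by simp
    have hx: "cmp C h x \<in> hom C (V k') (V k)" using h x by blast
    show "cmp C h ((\<lambda>(k, x, y). cmp C x y) t) = (case t of (k', x, y) \<Rightarrow> if k' = k then tnm C (scal C (V k) (cmp C h x)) y else 0)"
    proof (cases "k' = k")
      case True
      then have "cmp C h x = tnm C (scal C (V k) (cmp C h x)) (idm C (V k))" using endV hx by simp
      then have "cmp C (cmp C h x) y = tnm C (scal C (V k) (cmp C h x)) y"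
        using cmp_scl[of "scal C (V k) (cmp C h x)" y _ "V k" "idm C (V k)" "V k"] y True endV(1) hx by (simp add: cmp_idl)
      then show ?thesis using True as by simp
    next
      case False
      then have "cmp C h x = 0" using hom_VV_0[OF _ hx] by blast
      then show ?thesis using False as y by (simp add: cmp_0l)
    qed
  qed
  finally show ?thesis .
qed


section \<open>representing functionals\<close>

definition "linf H \<psi> \<longleftrightarrow> (\<forall>a\<in>H. \<psi> a \<in> hom C I I) \<and> (\<forall>a\<in>H. \<forall>b\<in>H. \<psi> (a + b) = \<psi> a + \<psi> b)
   \<and> (\<forall>c\<in>hom C I I. \<forall>a\<in>H. \<psi> (tnm C c a) = cmp C c (\<psi> a))"

lemma linf_0: "linf (hom C U W) \<psi> \<Longrightarrow> \<psi> 0 = 0"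
  unfolding linf_def using hom0[of U W] by (metis add_cancel_right_right add_0)
lemma linf_sum_list: assumes "linf (hom C U W) \<psi>" "\<And>x. x \<in> set xs \<Longrightarrow> f x \<in> hom C U W"
  shows "\<psi> (sum_list (map f xs)) = sum_list (map (\<lambda>x. \<psi> (f x)) xs)"
  using assms(2)
proof (induction xs)
  case Nil then show ?case using linf_0[OF assms(1)] by simp
next
  case (Cons x xs)
  then have "sum_list (map f xs) \<in> hom C U W" by (intro hom_sum_list) auto
  then show ?case using Cons assms(1) unfolding linf_def by simp
qed

definition "rep_chk i j k \<psi> = sum_list (map (\<lambda>(k', x, y). if k' = k then tnm C (\<psi> y) x else 0) (dec i j))"
definition "rep_hat i j k \<phi> = sum_list (map (\<lambda>(k', x, y). if k' = k then tnm C (\<phi> x) y else 0) (dec i j))"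

lemma rep_chk_hom: assumes "linf (hom C (tno C (V i) (V j)) (V k)) \<psi>"
  shows "rep_chk i j k \<psi> \<in> hom C (V k) (tno C (V i) (V j))"
  unfolding rep_chk_def
proof (rule hom_sum_list)
  fix t assume t: "t \<in> set (dec i j)"
  obtain k' x y where [simp]: "t = (k', x, y)" by (cases t) auto
  from dec_typ[of k' x y i j] t have y: "y \<in> hom C (tno C (V i) (V j)) (V k')" and x: "x \<in> hom C (V k') (tno C (V i) (V j))" by auto
  show "(case t of (k', x, y) \<Rightarrow> if k' = k then tnm C (\<psi> y) x else 0) \<in> hom C (V k) (tno C (V i) (V j))"
    using assms y x unfolding linf_def by auto
qed
lemma rep_hat_hom: assumes "linf (hom C (V k) (tno C (V i) (V j))) \<phi>"
  shows "rep_hat i j k \<phi> \<in> hom C (tno C (V i) (V j)) (V k)"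
  unfolding rep_hat_def
proof (rule hom_sum_list)
  fix t assume t: "t \<in> set (dec i j)"
  obtain k' x y where [simp]: "t = (k', x, y)" by (cases t) auto
  from dec_typ[of k' x y i j] t have y: "y \<in> hom C (tno C (V i) (V j)) (V k')" and x: "x \<in> hom C (V k') (tno C (V i) (V j))" by auto
  show "(case t of (k', x, y) \<Rightarrow> if k' = k then tnm C (\<phi> x) y else 0) \<in> hom C (tno C (V i) (V j)) (V k)"
    using assms y x unfolding linf_def by auto
qed

lemma rep_chk_prop: assumes L: "linf (hom C (tno C (V i) (V j)) (V k)) \<psi>"
  and h: "h \<in> hom C (tno C (V i) (V j)) (V k)"
  shows "scal C (V k) (cmp C h (rep_chk i j k \<psi>)) = \<psi> h"
proof -
  let ?f = "\<lambda>(k', x, y). if k' = k then tnm C (\<psi> y) x else 0"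
  let ?g = "\<lambda>(k', x, y). if k' = k then tnm C (scal C (V k) (cmp C h x)) y else 0"
  have tyf: "\<And>t. t \<in> set (dec i j) \<Longrightarrow> ?f t \<in> hom C (V k) (tno C (V i) (V j)) \<and> ?g t \<in> hom C (tno C (V i) (V j)) (V k)
     \<and> cmp C h (?f t) \<in> hom C (V k) (V k) \<and> scal C (V k) (cmp C h (?f t)) = \<psi> (?g t)"
  proof -
    fix t assume t: "t \<in> set (dec i j)"
    obtain k' x y where [simp]: "t = (k', x, y)" by (cases t) auto
    from dec_typ[of k' x y i j] t have y: "y \<in> hom C (tno C (V i) (V j)) (V k')" and x: "x \<in> hom C (V k') (tno C (V i) (V j))" by auto
    show "?f t \<in> hom C (V k) (tno C (V i) (V j)) \<and> ?g t \<in> hom C (tno C (V i) (V j)) (V k)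
     \<and> cmp C h (?f t) \<in> hom C (V k) (V k) \<and> scal C (V k) (cmp C h (?f t)) = \<psi> (?g t)"
    proof (cases "k' = k")
      case True
      have hx: "cmp C h x \<in> hom C (V k) (V k)" using h x True by blast
      have py: "\<psi> y \<in> hom C I I" using L y True unfolding linf_def by simp
      have e1: "scal C (V k) (cmp C h (tnm C (\<psi> y) x)) = cmp C (\<psi> y) (scal C (V k) (cmp C h x))"
        using cmp_scr[OF py _ h] x True scal_smul[OF py hx] by simp
      have e2: "\<psi> (tnm C (scal C (V k) (cmp C h x)) y) = cmp C (scal C (V k) (cmp C h x)) (\<psi> y)"
        using L y True endV(1)[OF hx] unfolding linf_def by simp
      show ?thesis using True e1 e2 ground_comm[OF py endV(1)[OF hx]] hx py x y h endV(1)[OF hx]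
        by (auto intro: cmp_hom sc_hom)
    next
      case False
      then show ?thesis using linf_0[OF L] h by (simp add: cmp_0r)
    qed
  qed
  have "scal C (V k) (cmp C h (rep_chk i j k \<psi>)) = scal C (V k) (sum_list (map (\<lambda>t. cmp C h (?f t)) (dec i j)))"
    unfolding rep_chk_def using cmp_sumlistr[of "dec i j" ?f "V k" "tno C (V i) (V j)" h "V k"] tyf h by simp
  also have "\<dots> = sum_list (map (\<lambda>t. scal C (V k) (cmp C h (?f t))) (dec i j))"
    using scal_sum_list[of "dec i j" "\<lambda>t. cmp C h (?f t)" k] tyf by simp
  also have "\<dots> = sum_list (map (\<lambda>t. \<psi> (?g t)) (dec i j))"
    using tyf by (intro sum_list_cong) simp
  also have "\<dots> = \<psi> (sum_list (map ?g (dec i j)))"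
    using linf_sum_list[OF L, of "dec i j" ?g] tyf by simp
  also have "sum_list (map ?g (dec i j)) = h" using hat_expand[OF h] by simp
  finally show ?thesis .
qed

lemma rep_hat_prop: assumes L: "linf (hom C (V k) (tno C (V i) (V j))) \<phi>"
  and w: "w \<in> hom C (V k) (tno C (V i) (V j))"
  shows "scal C (V k) (cmp C (rep_hat i j k \<phi>) w) = \<phi> w"
proof -
  let ?f = "\<lambda>(k', x, y). if k' = k then tnm C (\<phi> x) y else 0"
  let ?g = "\<lambda>(k', x, y). if k' = k then tnm C (scal C (V k) (cmp C y w)) x else 0"
  have tyf: "\<And>t. t \<in> set (dec i j) \<Longrightarrow> ?f t \<in> hom C (tno C (V i) (V j)) (V k) \<and> ?g t \<in> hom C (V k) (tno C (V i) (V j))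
     \<and> cmp C (?f t) w \<in> hom C (V k) (V k) \<and> scal C (V k) (cmp C (?f t) w) = \<phi> (?g t)"
  proof -
    fix t assume t: "t \<in> set (dec i j)"
    obtain k' x y where [simp]: "t = (k', x, y)" by (cases t) auto
    from dec_typ[of k' x y i j] t have y: "y \<in> hom C (tno C (V i) (V j)) (V k')" and x: "x \<in> hom C (V k') (tno C (V i) (V j))" by auto
    show "?f t \<in> hom C (tno C (V i) (V j)) (V k) \<and> ?g t \<in> hom C (V k) (tno C (V i) (V j))
     \<and> cmp C (?f t) w \<in> hom C (V k) (V k) \<and> scal C (V k) (cmp C (?f t) w) = \<phi> (?g t)"
    proof (cases "k' = k")
      case True
      have yw: "cmp C y w \<in> hom C (V k) (V k)" using w y True by blast
      have px: "\<phi> x \<in> hom C I I" using L x True unfolding linf_def by simp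
      have e1: "scal C (V k) (cmp C (tnm C (\<phi> x) y) w) = cmp C (\<phi> x) (scal C (V k) (cmp C y w))"
        using cmp_scl[OF px w] y True scal_smul[OF px yw] by simp
      have e2: "\<phi> (tnm C (scal C (V k) (cmp C y w)) x) = cmp C (scal C (V k) (cmp C y w)) (\<phi> x)"
        using L x True endV(1)[OF yw] unfolding linf_def by simp
      show ?thesis using True e1 e2 ground_comm[OF px endV(1)[OF yw]] yw px x y w endV(1)[OF yw]
        by (auto intro: cmp_hom sc_hom)
    next
      case False
      then show ?thesis using linf_0[OF L] w by (simp add: cmp_0l)
    qed
  qed
  have "scal C (V k) (cmp C (rep_hat i j k \<phi>) w) = scal C (V k) (sum_list (map (\<lambda>t. cmp C (?f t) w) (dec i j)))"
    unfolding rep_hat_def using cmp_sumlistl[of w "V k" "tno C (V i) (V j)" "dec i j" ?f "V k"] tyf w by simp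
  also have "\<dots> = sum_list (map (\<lambda>t. scal C (V k) (cmp C (?f t) w)) (dec i j))"
    using scal_sum_list[of "dec i j" "\<lambda>t. cmp C (?f t) w" k] tyf by simp
  also have "\<dots> = sum_list (map (\<lambda>t. \<phi> (?g t)) (dec i j))"
    using tyf by (intro sum_list_cong) simp
  also have "\<dots> = \<phi> (sum_list (map ?g (dec i j)))"
    using linf_sum_list[OF L, of "dec i j" ?g] tyf by simp
  also have "sum_list (map ?g (dec i j)) = w" using chk_expand[OF w] by simp
  finally show ?thesis .
qed


definition "hH t = (case t of (i, j, k) \<Rightarrow> hom C (tno C (V i) (V j)) (V k))"
definition "cH t = (case t of (i, j, k) \<Rightarrow> hom C (V k) (tno C (V i) (V j)))"
definition "kk t = snd (snd t)"
definition "supp x = {t. fst x t \<noteq> 0} \<union> {t. snd x t \<noteq> 0}"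
definition "pt x y t = scal C (V (kk t)) (cmp C (fst x t) (snd y t)) + scal C (V (kk t)) (cmp C (fst y t) (snd x t))"

lemma hH_simp[simp]: "hH (i, j, k) = hom C (tno C (V i) (V j)) (V k)" by (simp add: hH_def)
lemma cH_simp[simp]: "cH (i, j, k) = hom C (V k) (tno C (V i) (V j))" by (simp add: cH_def)
lemma kk_simp[simp]: "kk (i, j, k) = k" by (simp add: kk_def)

lemma Hspace_iff: "x \<in> Hspace C V \<longleftrightarrow> (\<forall>t. fst x t \<in> hH t \<and> snd x t \<in> cH t) \<and> finite (supp x)"
  unfolding Hspace_def supp_def hH_def cH_def by auto
lemma HspaceD: "x \<in> Hspace C V \<Longrightarrow> fst x t \<in> hH t" "x \<in> Hspace C V \<Longrightarrow> snd x t \<in> cH t"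
  "x \<in> Hspace C V \<Longrightarrow> finite (supp x)"
  unfolding Hspace_iff by blast+

lemma H_cmp0: assumes "u \<in> Hspace C V" shows "cmp C (fst u s) 0 = 0" "cmp C 0 (snd u s) = 0"
proof -
  obtain i j k where s: "s = (i, j, k)" by (cases s) auto
  show "cmp C (fst u s) 0 = 0" using HspaceD(1)[OF assms, of s] s cmp_0r by simp
  show "cmp C 0 (snd u s) = 0" using HspaceD(2)[OF assms, of s] s cmp_0l by simp
qed

lemma hH_cH_end: "a \<in> hH t \<Longrightarrow> b \<in> cH t \<Longrightarrow> cmp C a b \<in> hom C (V (kk t)) (V (kk t))"
  by (cases t) (auto simp: kk_def intro: cmp_hom)

lemma sum_fun_apply: "(\<Sum>t\<in>S. f t) u = (\<Sum>t\<in>S. f t u)"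
  by (induction S rule: infinite_finite_induct) auto

lemma pt_zero: assumes "x \<in> Hspace C V" "y \<in> Hspace C V" "t \<notin> supp y"
  shows "pt x y t = 0"
proof -
  have "fst y t = 0" "snd y t = 0" using assms(3) unfolding supp_def by auto
  then show ?thesis using H_cmp0[OF assms(1)] unfolding pt_def by simp
qed
lemma pt_sym: "pt x y t = pt y x t" unfolding pt_def by (simp add: add.commute)

lemma pform_sum: assumes x: "x \<in> Hspace C V" and y: "y \<in> Hspace C V" and S: "finite S" "supp x \<union> supp y \<subseteq> S"
  shows "pform C V x y = (\<Sum>t\<in>S. pt x y t)"
proof -
  have e: "{t. fst x t \<noteq> 0 \<or> snd x t \<noteq> 0 \<or> fst y t \<noteq> 0 \<or> snd y t \<noteq> 0} = supp x \<union> supp y"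
    unfolding supp_def by auto
  have "pform C V x y = (\<Sum>t\<in>supp x \<union> supp y. pt x y t)"
    unfolding pform_def e pt_def kk_def by (intro sum.cong refl) (auto split: prod.splits)
  also have "\<dots> = (\<Sum>t\<in>S. pt x y t)"
  proof (rule sum.mono_neutral_left[OF S])
    show "\<forall>t\<in>S - (supp x \<union> supp y). pt x y t = 0" using pt_zero[OF x y] by auto
  qed
  finally show ?thesis .
qed

lemma inj_hat_H: "h \<in> hH t \<Longrightarrow> inj_hat t h \<in> Hspace C V"
  unfolding Hspace_iff inj_hat_def supp_def
  by (auto simp: hH_def cH_def split: prod.splits intro: finite_subset[of _ "{t}"])
lemma inj_chk_H: "w \<in> cH t \<Longrightarrow> inj_chk t w \<in> Hspace C V"
  unfolding Hspace_iff inj_chk_def supp_def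
  by (auto simp: hH_def cH_def split: prod.splits intro: finite_subset[of _ "{t}"])

lemma pform_inj_hat: assumes h: "h \<in> hH t" and u: "u \<in> Hspace C V"
  shows "pform C V (inj_hat t h) u = scal C (V (kk t)) (cmp C h (snd u t))"
proof -
  have S: "finite (insert t (supp u))" using HspaceD(3)[OF u] by simp
  have "supp (inj_hat t h) \<subseteq> {t}" unfolding supp_def inj_hat_def by auto
  then have "pform C V (inj_hat t h) u = (\<Sum>s\<in>insert t (supp u). pt (inj_hat t h) u s)"
    by (intro pform_sum[OF inj_hat_H[OF h] u S]) auto
  also have "\<dots> = (\<Sum>s\<in>{t}. pt (inj_hat t h) u s)"
  proof (rule sum.mono_neutral_right[OF S])
    show "{t} \<subseteq> insert t (supp u)" by simp
    show "\<forall>s\<in>insert t (supp u) - {t}. pt (inj_hat t h) u s = 0"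
      using H_cmp0[OF u] unfolding pt_def inj_hat_def by auto
  qed
  also have "\<dots> = pt (inj_hat t h) u t" by simp
  also have "\<dots> = scal C (V (kk t)) (cmp C h (snd u t))"
    using H_cmp0[OF u] unfolding pt_def inj_hat_def by simp
  finally show ?thesis .
qed
lemma pform_inj_chk: assumes w: "w \<in> cH t" and u: "u \<in> Hspace C V"
  shows "pform C V (inj_chk t w) u = scal C (V (kk t)) (cmp C (fst u t) w)"
proof -
  have S: "finite (insert t (supp u))" using HspaceD(3)[OF u] by simp
  have "supp (inj_chk t w) \<subseteq> {t}" unfolding supp_def inj_chk_def by auto
  then have "pform C V (inj_chk t w) u = (\<Sum>s\<in>insert t (supp u). pt (inj_chk t w) u s)"
    by (intro pform_sum[OF inj_chk_H[OF w] u S]) auto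
  also have "\<dots> = (\<Sum>s\<in>{t}. pt (inj_chk t w) u s)"
  proof (rule sum.mono_neutral_right[OF S])
    show "{t} \<subseteq> insert t (supp u)" by simp
    show "\<forall>s\<in>insert t (supp u) - {t}. pt (inj_chk t w) u s = 0"
      using H_cmp0[OF u] unfolding pt_def inj_chk_def by auto
  qed
  also have "\<dots> = pt (inj_chk t w) u t" by simp
  also have "\<dots> = scal C (V (kk t)) (cmp C (fst u t) w)"
    using H_cmp0[OF u] unfolding pt_def inj_chk_def by simp
  finally show ?thesis .
qed

lemma nondeg: assumes u: "u \<in> Hspace C V" and v: "v \<in> Hspace C V"
  and eq: "\<And>z. z \<in> Hspace C V \<Longrightarrow> pform C V z u = pform C V z v"
  shows "u = v"
proof -
  have "fst u t = fst v t \<and> snd u t = snd v t" for t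
  proof -
    obtain i j k where t: "t = (i, j, k)" by (cases t) auto
    have A: "scal C (V k) (cmp C h (snd u t)) = scal C (V k) (cmp C h (snd v t))" if "h \<in> hH t" for h
      using eq[OF inj_hat_H[OF that]] pform_inj_hat[OF that u] pform_inj_hat[OF that v] t by simp
    have B: "scal C (V k) (cmp C (fst u t) w) = scal C (V k) (cmp C (fst v t) w)" if "w \<in> cH t" for w
      using eq[OF inj_chk_H[OF that]] pform_inj_chk[OF that u] pform_inj_chk[OF that v] t by simp
    have su: "snd u t \<in> hom C (V k) (tno C (V i) (V j))" "snd v t \<in> hom C (V k) (tno C (V i) (V j))"
      using HspaceD[OF u] HspaceD[OF v] t by auto
    have fu: "fst u t \<in> hom C (tno C (V i) (V j)) (V k)" "fst v t \<in> hom C (tno C (V i) (V j)) (V k)"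
      using HspaceD[OF u] HspaceD[OF v] t by auto
    have "snd u t = snd v t"
    proof -
      have "snd u t = sum_list (map (\<lambda>(k', x, y). if k' = k then tnm C (scal C (V k) (cmp C y (snd u t))) x else 0) (dec i j))"
        by (rule chk_expand[OF su(1)])
      also have "\<dots> = sum_list (map (\<lambda>(k', x, y). if k' = k then tnm C (scal C (V k) (cmp C y (snd v t))) x else 0) (dec i j))"
      proof (rule sum_list_cong)
        fix s assume s: "s \<in> set (dec i j)"
        obtain k' x y where [simp]: "s = (k', x, y)" by (cases s) auto
        from dec_typ[of k' x y i j] s have y: "y \<in> hom C (tno C (V i) (V j)) (V k')" by auto
        show "(case s of (k', x, y) \<Rightarrow> if k' = k then tnm C (scal C (V k) (cmp C y (snd u t))) x else 0) =
              (case s of (k', x, y) \<Rightarrow> if k' = k then tnm C (scal C (V k) (cmp C y (snd v t))) x else 0)"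
          using A[of y] y t by auto
      qed
      also have "\<dots> = snd v t" by (rule chk_expand[OF su(2), symmetric])
      finally show ?thesis .
    qed
    moreover have "fst u t = fst v t"
    proof -
      have "fst u t = sum_list (map (\<lambda>(k', x, y). if k' = k then tnm C (scal C (V k) (cmp C (fst u t) x)) y else 0) (dec i j))"
        by (rule hat_expand[OF fu(1)])
      also have "\<dots> = sum_list (map (\<lambda>(k', x, y). if k' = k then tnm C (scal C (V k) (cmp C (fst v t) x)) y else 0) (dec i j))"
      proof (rule sum_list_cong)
        fix s assume s: "s \<in> set (dec i j)"
        obtain k' x y where [simp]: "s = (k', x, y)" by (cases s) auto
        from dec_typ[of k' x y i j] s have x: "x \<in> hom C (V k') (tno C (V i) (V j))" by auto
        show "(case s of (k', x, y) \<Rightarrow> if k' = k then tnm C (scal C (V k) (cmp C (fst u t) x)) y else 0) =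
              (case s of (k', x, y) \<Rightarrow> if k' = k then tnm C (scal C (V k) (cmp C (fst v t) x)) y else 0)"
          using B[of x] x t by auto
      qed
      also have "\<dots> = fst v t" by (rule hat_expand[OF fu(2), symmetric])
      finally show ?thesis .
    qed
    ultimately show ?thesis by simp
  qed
  then show ?thesis by (simp add: prod_eq_iff fun_eq_iff)
qed


definition "tA t = (case t of (i, j, k) \<Rightarrow> (st i, k, j))"
definition "tB t = (case t of (i, j, k) \<Rightarrow> (k, st j, i))"
definition "AH t = (case t of (i, j, k) \<Rightarrow> Ah i j)"
definition "AC t = (case t of (i, j, k) \<Rightarrow> Ac i j)"
definition "BH t = (case t of (i, j, k) \<Rightarrow> Bh i j)"
definition "BC t = (case t of (i, j, k) \<Rightarrow> Bc i j)"
definition "opg \<tau> F G x = (\<Sum>t\<in>{t. fst x t \<noteq> 0}. inj_chk (\<tau> t) (F t (fst x t)))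
   + (\<Sum>t\<in>{t. snd x t \<noteq> 0}. inj_hat (\<tau> t) (G t (snd x t)))"

lemma tA_simp[simp]: "tA (i, j, k) = (st i, k, j)" by (simp add: tA_def)
lemma tB_simp[simp]: "tB (i, j, k) = (k, st j, i)" by (simp add: tB_def)
lemma tA_inv[simp]: "tA (tA t) = t" by (cases t) simp
lemma tB_inv[simp]: "tB (tB t) = t" by (cases t) simp
lemma AH_simp[simp]: "AH (i, j, k) = Ah i j" by (simp add: AH_def)
lemma AC_simp[simp]: "AC (i, j, k) = Ac i j" by (simp add: AC_def)
lemma BH_simp[simp]: "BH (i, j, k) = Bh i j" by (simp add: BH_def)
lemma BC_simp[simp]: "BC (i, j, k) = Bc i j" by (simp add: BC_def)

lemma opA_eq: "opA C V st bb dd = opg tA AH AC"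
  unfolding opA_def opg_def
  by (intro ext arg_cong2[where f = "(+)"] sum.cong refl) (auto simp: Ah_def Ac_def split: prod.splits)
lemma opB_eq: "opB C V st bb dd = opg tB BH BC"
  unfolding opB_def opg_def
  by (intro ext arg_cong2[where f = "(+)"] sum.cong refl) (auto simp: Bh_def Bc_def split: prod.splits)

lemma opg_comp:
  assumes inv: "\<And>t. \<tau> (\<tau> t) = t" and x: "x \<in> Hspace C V"
    and F0: "\<And>t. F t 0 = 0" and G0: "\<And>t. G t 0 = 0"
  shows "fst (opg \<tau> F G x) u = G (\<tau> u) (snd x (\<tau> u))" "snd (opg \<tau> F G x) u = F (\<tau> u) (fst x (\<tau> u))"
proof -
  have f1: "finite {t. fst x t \<noteq> 0}" "finite {t. snd x t \<noteq> 0}"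
    using HspaceD(3)[OF x] unfolding supp_def by auto
  have e: "(u = \<tau> t) = (t = \<tau> u)" for t using inv by metis
  have "fst (opg \<tau> F G x) u = (\<Sum>t\<in>{t. snd x t \<noteq> 0}. (if t = \<tau> u then G t (snd x t) else 0))"
    unfolding opg_def by (simp add: fst_sum sum_fun_apply inj_chk_def inj_hat_def e)
  also have "\<dots> = G (\<tau> u) (snd x (\<tau> u))" using G0 by (auto simp: sum.delta[OF f1(2)])
  finally show "fst (opg \<tau> F G x) u = G (\<tau> u) (snd x (\<tau> u))" .
  have "snd (opg \<tau> F G x) u = (\<Sum>t\<in>{t. fst x t \<noteq> 0}. (if t = \<tau> u then F t (fst x t) else 0))"
    unfolding opg_def by (simp add: snd_sum sum_fun_apply inj_chk_def inj_hat_def e)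
  also have "\<dots> = F (\<tau> u) (fst x (\<tau> u))" using F0 by (auto simp: sum.delta[OF f1(1)])
  finally show "snd (opg \<tau> F G x) u = F (\<tau> u) (fst x (\<tau> u))" .
qed

lemma opg_H:
  assumes inv: "\<And>t. \<tau> (\<tau> t) = t" and x: "x \<in> Hspace C V"
    and F0: "\<And>t. F t 0 = 0" and G0: "\<And>t. G t 0 = 0"
    and Ft: "\<And>t h. h \<in> hH t \<Longrightarrow> F t h \<in> cH (\<tau> t)" and Gt: "\<And>t w. w \<in> cH t \<Longrightarrow> G t w \<in> hH (\<tau> t)"
  shows "opg \<tau> F G x \<in> Hspace C V" "supp (opg \<tau> F G x) \<subseteq> \<tau> ` supp x"
proof -
  note c = opg_comp[of \<tau> x F G, OF inv x F0 G0]
  show sp: "supp (opg \<tau> F G x) \<subseteq> \<tau> ` supp x"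
  proof
    fix u assume "u \<in> supp (opg \<tau> F G x)"
    then have "\<tau> u \<in> supp x" unfolding supp_def c by (auto simp: F0 G0)
    then show "u \<in> \<tau> ` supp x" using inv by (metis image_eqI)
  qed
  have "fst (opg \<tau> F G x) u \<in> hH u \<and> snd (opg \<tau> F G x) u \<in> cH u" for u
    unfolding c using Gt[OF HspaceD(2)[OF x]] Ft[OF HspaceD(1)[OF x]] inv by metis
  moreover have "finite (supp (opg \<tau> F G x))" using finite_subset[OF sp] HspaceD(3)[OF x] by blast
  ultimately show "opg \<tau> F G x \<in> Hspace C V" unfolding Hspace_iff by blast
qed

lemma AH_typ: "h \<in> hH t \<Longrightarrow> AH t h \<in> cH (tA t)" by (cases t) auto
lemma AC_typ: "w \<in> cH t \<Longrightarrow> AC t w \<in> hH (tA t)" by (cases t) auto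
lemma BH_typ: "h \<in> hH t \<Longrightarrow> BH t h \<in> cH (tB t)" by (cases t) auto
lemma BC_typ: "w \<in> cH t \<Longrightarrow> BC t w \<in> hH (tB t)" by (cases t) auto
lemma AH0: "AH t 0 = 0" by (cases t) (simp add: Ah_lin(3)[OF hom0 hom0 hom0])
lemma AC0: "AC t 0 = 0" by (cases t) (simp add: Ac_lin(3)[OF hom0 hom0 hom0])
lemma BH0: "BH t 0 = 0" by (cases t) (simp add: Bh_lin(3)[OF hom0 hom0 hom0])
lemma BC0: "BC t 0 = 0" by (cases t) (simp add: Bc_lin(3)[OF hom0 hom0 hom0])

lemma opA_H: "x \<in> Hspace C V \<Longrightarrow> opA C V st bb dd x \<in> Hspace C V"
  unfolding opA_eq by (rule opg_H(1)) (auto intro: AH0 AC0 AH_typ AC_typ)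
lemma opB_H: "x \<in> Hspace C V \<Longrightarrow> opB C V st bb dd x \<in> Hspace C V"
  unfolding opB_eq by (rule opg_H(1)) (auto intro: BH0 BC0 BH_typ BC_typ)
lemma opA_comp: "x \<in> Hspace C V \<Longrightarrow> fst (opA C V st bb dd x) u = AC (tA u) (snd x (tA u))"
  "x \<in> Hspace C V \<Longrightarrow> snd (opA C V st bb dd x) u = AH (tA u) (fst x (tA u))"
  unfolding opA_eq by (rule opg_comp; simp add: AH0 AC0)+
lemma opB_comp: "x \<in> Hspace C V \<Longrightarrow> fst (opB C V st bb dd x) u = BC (tB u) (snd x (tB u))"
  "x \<in> Hspace C V \<Longrightarrow> snd (opB C V st bb dd x) u = BH (tB u) (fst x (tB u))"
  unfolding opB_eq by (rule opg_comp; simp add: BH0 BC0)+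


section \<open>generic transpose\<close>

lemma tnm_sumlistr: "(\<And>x. x \<in> set xs \<Longrightarrow> f x \<in> hom C U W) \<Longrightarrow> g \<in> hom C U' W' \<Longrightarrow>
   tnm C g (sum_list (map f xs)) = sum_list (map (\<lambda>x. tnm C g (f x)) xs)"
proof (induction xs)
  case (Cons x xs) then have "sum_list (map f xs) \<in> hom C U W" by (intro hom_sum_list) auto
  with Cons show ?case by (simp add: tnm_addr[of "f x" U W "sum_list (map f xs)" g])
qed (auto simp: tnm_0r)

lemma hc_end: "a \<in> hH s \<Longrightarrow> b \<in> cH s \<Longrightarrow> cmp C a b \<in> hom C (V (kk s)) (V (kk s))"
  by (cases s) (auto intro: cmp_hom)
lemma hc_addl: "a \<in> hH s \<Longrightarrow> a' \<in> hH s \<Longrightarrow> b \<in> cH s \<Longrightarrow> cmp C (a + a') b = cmp C a b + cmp C a' b"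
  by (cases s) (auto intro: cmp_addl)
lemma hc_addr: "a \<in> hH s \<Longrightarrow> b \<in> cH s \<Longrightarrow> b' \<in> cH s \<Longrightarrow> cmp C a (b + b') = cmp C a b + cmp C a b'"
  by (cases s) (auto intro: cmp_addr)
lemma hc_scl: "c \<in> hom C I I \<Longrightarrow> a \<in> hH s \<Longrightarrow> b \<in> cH s \<Longrightarrow> cmp C (tnm C c a) b = tnm C c (cmp C a b)"
  by (cases s) (auto intro: cmp_scl)
lemma hc_scr: "c \<in> hom C I I \<Longrightarrow> a \<in> hH s \<Longrightarrow> b \<in> cH s \<Longrightarrow> cmp C a (tnm C c b) = tnm C c (cmp C a b)"
  by (cases s) (auto intro: cmp_scr)
lemma hH_add: "a \<in> hH s \<Longrightarrow> a' \<in> hH s \<Longrightarrow> a + a' \<in> hH s" by (cases s) auto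
lemma cH_add: "a \<in> cH s \<Longrightarrow> a' \<in> cH s \<Longrightarrow> a + a' \<in> cH s" by (cases s) auto
lemma hH_sc: "c \<in> hom C I I \<Longrightarrow> a \<in> hH s \<Longrightarrow> tnm C c a \<in> hH s" by (cases s) auto
lemma cH_sc: "c \<in> hom C I I \<Longrightarrow> a \<in> cH s \<Longrightarrow> tnm C c a \<in> cH s" by (cases s) auto
lemma scal_kk_add: "a \<in> hom C (V (kk s)) (V (kk s)) \<Longrightarrow> b \<in> hom C (V (kk s)) (V (kk s)) \<Longrightarrow>
   scal C (V (kk s)) (a + b) = scal C (V (kk s)) a + scal C (V (kk s)) b" by (rule scal_add)

definition "RH t \<phi> = (case t of (i, j, k) \<Rightarrow> rep_hat i j k \<phi>)"
definition "RC t \<psi> = (case t of (i, j, k) \<Rightarrow> rep_chk i j k \<psi>)"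

lemma RH_hom: "linf (cH t) \<phi> \<Longrightarrow> RH t \<phi> \<in> hH t"
  by (cases t) (auto simp: RH_def intro: rep_hat_hom)
lemma RC_hom: "linf (hH t) \<psi> \<Longrightarrow> RC t \<psi> \<in> cH t"
  by (cases t) (auto simp: RC_def intro: rep_chk_hom)
lemma RH_prop: "linf (cH t) \<phi> \<Longrightarrow> w \<in> cH t \<Longrightarrow> scal C (V (kk t)) (cmp C (RH t \<phi>) w) = \<phi> w"
  by (cases t) (auto simp: RH_def intro: rep_hat_prop)
lemma RC_prop: "linf (hH t) \<psi> \<Longrightarrow> h \<in> hH t \<Longrightarrow> scal C (V (kk t)) (cmp C h (RC t \<psi>)) = \<psi> h"
  by (cases t) (auto simp: RC_def intro: rep_chk_prop)

lemma RH_lin: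
  assumes "\<And>w. w \<in> cH t \<Longrightarrow> \<phi> w = \<phi>1 w + \<phi>2 w" "\<And>w. w \<in> cH t \<Longrightarrow> \<phi>1 w \<in> hom C I I"
    "\<And>w. w \<in> cH t \<Longrightarrow> \<phi>2 w \<in> hom C I I"
  shows "RH t \<phi> = RH t \<phi>1 + RH t \<phi>2"
proof -
  obtain i j k where t: "t = (i, j, k)" by (cases t) auto
  have "rep_hat i j k \<phi> = sum_list (map (\<lambda>s. (\<lambda>(k', x, y). if k' = k then tnm C (\<phi>1 x) y else 0) s +
     (\<lambda>(k', x, y). if k' = k then tnm C (\<phi>2 x) y else 0) s) (dec i j))"
    unfolding rep_hat_def
  proof (rule sum_list_cong)
    fix s assume s: "s \<in> set (dec i j)"
    obtain k' x y where [simp]: "s = (k', x, y)" by (cases s) auto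
    from dec_typ[of k' x y i j] s have y: "y \<in> hom C (tno C (V i) (V j)) (V k')" and x: "x \<in> hom C (V k') (tno C (V i) (V j))" by auto
    show "(case s of (k', x, y) \<Rightarrow> if k' = k then tnm C (\<phi> x) y else 0) = (\<lambda>(k', x, y). if k' = k then tnm C (\<phi>1 x) y else 0) s +
     (\<lambda>(k', x, y). if k' = k then tnm C (\<phi>2 x) y else 0) s"
      using assms[of x] x y t by (auto intro: tnm_addl)
  qed
  then show ?thesis unfolding RH_def t rep_hat_def by (simp add: sum_list_addf)
qed
lemma RC_lin:
  assumes "\<And>w. w \<in> hH t \<Longrightarrow> \<phi> w = \<phi>1 w + \<phi>2 w" "\<And>w. w \<in> hH t \<Longrightarrow> \<phi>1 w \<in> hom C I I"
    "\<And>w. w \<in> hH t \<Longrightarrow> \<phi>2 w \<in> hom C I I"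
  shows "RC t \<phi> = RC t \<phi>1 + RC t \<phi>2"
proof -
  obtain i j k where t: "t = (i, j, k)" by (cases t) auto
  have "rep_chk i j k \<phi> = sum_list (map (\<lambda>s. (\<lambda>(k', x, y). if k' = k then tnm C (\<phi>1 y) x else 0) s +
     (\<lambda>(k', x, y). if k' = k then tnm C (\<phi>2 y) x else 0) s) (dec i j))"
    unfolding rep_chk_def
  proof (rule sum_list_cong)
    fix s assume s: "s \<in> set (dec i j)"
    obtain k' x y where [simp]: "s = (k', x, y)" by (cases s) auto
    from dec_typ[of k' x y i j] s have y: "y \<in> hom C (tno C (V i) (V j)) (V k')" and x: "x \<in> hom C (V k') (tno C (V i) (V j))" by auto
    show "(case s of (k', x, y) \<Rightarrow> if k' = k then tnm C (\<phi> y) x else 0) = (\<lambda>(k', x, y). if k' = k then tnm C (\<phi>1 y) x else 0) s +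
     (\<lambda>(k', x, y). if k' = k then tnm C (\<phi>2 y) x else 0) s"
      using assms[of y] x y t by (auto intro: tnm_addl)
  qed
  then show ?thesis unfolding RC_def t rep_chk_def by (simp add: sum_list_addf)
qed
lemma RH_sc:
  assumes c: "c \<in> hom C I I" and "\<And>w. w \<in> cH t \<Longrightarrow> \<phi> w = cmp C c (\<phi>1 w)" "\<And>w. w \<in> cH t \<Longrightarrow> \<phi>1 w \<in> hom C I I"
  shows "RH t \<phi> = tnm C c (RH t \<phi>1)"
proof -
  obtain i j k where t: "t = (i, j, k)" by (cases t) auto
  have "rep_hat i j k \<phi> = sum_list (map (\<lambda>s. tnm C c ((\<lambda>(k', x, y). if k' = k then tnm C (\<phi>1 x) y else 0) s)) (dec i j))"
    unfolding rep_hat_def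
  proof (rule sum_list_cong)
    fix s assume s: "s \<in> set (dec i j)"
    obtain k' x y where [simp]: "s = (k', x, y)" by (cases s) auto
    from dec_typ[of k' x y i j] s have y: "y \<in> hom C (tno C (V i) (V j)) (V k')" and x: "x \<in> hom C (V k') (tno C (V i) (V j))" by auto
    show "(case s of (k', x, y) \<Rightarrow> if k' = k then tnm C (\<phi> x) y else 0) = tnm C c ((\<lambda>(k', x, y). if k' = k then tnm C (\<phi>1 x) y else 0) s)"
      using assms(2,3)[of x] x y t c by (auto simp: sc_sc tnm_0r[OF c])
  qed
  also have "\<dots> = tnm C c (rep_hat i j k \<phi>1)"
    unfolding rep_hat_def
  proof (rule tnm_sumlistr[symmetric, OF _ c])
    fix s assume s: "s \<in> set (dec i j)"
    obtain k' x y where [simp]: "s = (k', x, y)" by (cases s) auto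
    from dec_typ[of k' x y i j] s have y: "y \<in> hom C (tno C (V i) (V j)) (V k')" and x: "x \<in> hom C (V k') (tno C (V i) (V j))" by auto
    show "(\<lambda>(k', x, y). if k' = k then tnm C (\<phi>1 x) y else 0) s \<in> hom C (tno C (V i) (V j)) (V k)"
      using assms(3)[of x] x y t by auto
  qed
  finally show ?thesis unfolding RH_def t by simp
qed
lemma RC_sc:
  assumes c: "c \<in> hom C I I" and "\<And>w. w \<in> hH t \<Longrightarrow> \<phi> w = cmp C c (\<phi>1 w)" "\<And>w. w \<in> hH t \<Longrightarrow> \<phi>1 w \<in> hom C I I"
  shows "RC t \<phi> = tnm C c (RC t \<phi>1)"
proof -
  obtain i j k where t: "t = (i, j, k)" by (cases t) auto
  have "rep_chk i j k \<phi> = sum_list (map (\<lambda>s. tnm C c ((\<lambda>(k', x, y). if k' = k then tnm C (\<phi>1 y) x else 0) s)) (dec i j))"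
    unfolding rep_chk_def
  proof (rule sum_list_cong)
    fix s assume s: "s \<in> set (dec i j)"
    obtain k' x y where [simp]: "s = (k', x, y)" by (cases s) auto
    from dec_typ[of k' x y i j] s have y: "y \<in> hom C (tno C (V i) (V j)) (V k')" and x: "x \<in> hom C (V k') (tno C (V i) (V j))" by auto
    show "(case s of (k', x, y) \<Rightarrow> if k' = k then tnm C (\<phi> y) x else 0) = tnm C c ((\<lambda>(k', x, y). if k' = k then tnm C (\<phi>1 y) x else 0) s)"
      using assms(2,3)[of y] x y t c by (auto simp: sc_sc tnm_0r[OF c])
  qed
  also have "\<dots> = tnm C c (rep_chk i j k \<phi>1)"
    unfolding rep_chk_def
  proof (rule tnm_sumlistr[symmetric, OF _ c])
    fix s assume s: "s \<in> set (dec i j)"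
    obtain k' x y where [simp]: "s = (k', x, y)" by (cases s) auto
    from dec_typ[of k' x y i j] s have y: "y \<in> hom C (tno C (V i) (V j)) (V k')" and x: "x \<in> hom C (V k') (tno C (V i) (V j))" by auto
    show "(\<lambda>(k', x, y). if k' = k then tnm C (\<phi>1 y) x else 0) s \<in> hom C (V k) (tno C (V i) (V j))"
      using assms(3)[of y] x y t by auto
  qed
  finally show ?thesis unfolding RC_def t by simp
qed
lemma RH_zero: assumes "\<And>w. w \<in> cH t \<Longrightarrow> \<phi> w = 0" shows "RH t \<phi> = 0"
proof -
  obtain i j k where t: "t = (i, j, k)" by (cases t) auto
  have "rep_hat i j k \<phi> = 0" unfolding rep_hat_def
  proof (rule sum_list_zero)
    fix s assume s: "s \<in> set (dec i j)"
    obtain k' x y where [simp]: "s = (k', x, y)" by (cases s) auto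
    from dec_typ[of k' x y i j] s have y: "y \<in> hom C (tno C (V i) (V j)) (V k')" and x: "x \<in> hom C (V k') (tno C (V i) (V j))" by auto
    show "(case s of (k', x, y) \<Rightarrow> if k' = k then tnm C (\<phi> x) y else 0) = 0"
      using assms[of x] x y t by (auto simp: tnm_0l)
  qed
  then show ?thesis unfolding RH_def t by simp
qed
lemma RC_zero: assumes "\<And>w. w \<in> hH t \<Longrightarrow> \<phi> w = 0" shows "RC t \<phi> = 0"
proof -
  obtain i j k where t: "t = (i, j, k)" by (cases t) auto
  have "rep_chk i j k \<phi> = 0" unfolding rep_chk_def
  proof (rule sum_list_zero)
    fix s assume s: "s \<in> set (dec i j)"
    obtain k' x y where [simp]: "s = (k', x, y)" by (cases s) auto
    from dec_typ[of k' x y i j] s have y: "y \<in> hom C (tno C (V i) (V j)) (V k')" and x: "x \<in> hom C (V k') (tno C (V i) (V j))" by auto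
    show "(case s of (k', x, y) \<Rightarrow> if k' = k then tnm C (\<phi> y) x else 0) = 0"
      using assms[of y] x y t by (auto simp: tnm_0l)
  qed
  then show ?thesis unfolding RC_def t by simp
qed


lemma hc_0r: "a \<in> hH s \<Longrightarrow> cmp C a 0 = 0" by (cases s) (auto intro: cmp_0r)
lemma hc_0l: "b \<in> cH s \<Longrightarrow> cmp C 0 b = 0" by (cases s) (auto intro: cmp_0l)

lemma trans_gen:
  assumes inv: "\<And>t. \<tau> (\<tau> t) = t"
    and F0: "\<And>t. F t 0 = 0" and G0: "\<And>t. G t 0 = 0"
    and Ft: "\<And>t h. h \<in> hH t \<Longrightarrow> F t h \<in> cH (\<tau> t)" and Gt: "\<And>t w. w \<in> cH t \<Longrightarrow> G t w \<in> hH (\<tau> t)"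
    and Fadd: "\<And>t a b. a \<in> hH t \<Longrightarrow> b \<in> hH t \<Longrightarrow> F t (a + b) = F t a + F t b"
    and Fsc: "\<And>t c a. c \<in> hom C I I \<Longrightarrow> a \<in> hH t \<Longrightarrow> F t (tnm C c a) = tnm C c (F t a)"
    and Gadd: "\<And>t a b. a \<in> cH t \<Longrightarrow> b \<in> cH t \<Longrightarrow> G t (a + b) = G t a + G t b"
    and Gsc: "\<And>t c a. c \<in> hom C I I \<Longrightarrow> a \<in> cH t \<Longrightarrow> G t (tnm C c a) = tnm C c (G t a)"
  shows "\<exists>T. is_transpose C V (opg \<tau> F G) T"
proof -
  define phi where "phi y t w = scal C (V (kk (\<tau> t))) (cmp C (G t w) (snd y (\<tau> t)))" for y :: "('i, 'm) hsp" and t w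
  define psi where "psi y t h = scal C (V (kk (\<tau> t))) (cmp C (fst y (\<tau> t)) (F t h))" for y :: "('i, 'm) hsp" and t h
  define T where "T y = ((\<lambda>t. RH t (phi y t)), (\<lambda>t. RC t (psi y t)))" for y
  have phig: "phi y t w \<in> hom C I I" if y: "y \<in> Hspace C V" and w: "w \<in> cH t" for y t w
    unfolding phi_def by (rule endV(1)[OF hc_end[OF Gt[OF w] HspaceD(2)[OF y]]])
  have psig: "psi y t h \<in> hom C I I" if y: "y \<in> Hspace C V" and h: "h \<in> hH t" for y t h
    unfolding psi_def by (rule endV(1)[OF hc_end[OF HspaceD(1)[OF y] Ft[OF h]]])
  have Lphi: "linf (cH t) (phi y t)" if y: "y \<in> Hspace C V" for y t
    unfolding linf_def
  proof (intro conjI ballI)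
    fix a assume a: "a \<in> cH t" then show "phi y t a \<in> hom C I I" by (rule phig[OF y])
  next
    fix a b assume a: "a \<in> cH t" and b: "b \<in> cH t"
    show "phi y t (a + b) = phi y t a + phi y t b"
      unfolding phi_def Gadd[OF a b] hc_addl[OF Gt[OF a] Gt[OF b] HspaceD(2)[OF y]]
      by (rule scal_add[OF hc_end[OF Gt[OF a] HspaceD(2)[OF y]] hc_end[OF Gt[OF b] HspaceD(2)[OF y]]])
  next
    fix c a assume c: "c \<in> hom C I I" and a: "a \<in> cH t"
    show "phi y t (tnm C c a) = cmp C c (phi y t a)"
      unfolding phi_def Gsc[OF c a] hc_scl[OF c Gt[OF a] HspaceD(2)[OF y]]
      by (rule scal_smul[OF c hc_end[OF Gt[OF a] HspaceD(2)[OF y]]])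
  qed
  have Lpsi: "linf (hH t) (psi y t)" if y: "y \<in> Hspace C V" for y t
    unfolding linf_def
  proof (intro conjI ballI)
    fix a assume a: "a \<in> hH t" then show "psi y t a \<in> hom C I I" by (rule psig[OF y])
  next
    fix a b assume a: "a \<in> hH t" and b: "b \<in> hH t"
    show "psi y t (a + b) = psi y t a + psi y t b"
      unfolding psi_def Fadd[OF a b] hc_addr[OF HspaceD(1)[OF y] Ft[OF a] Ft[OF b]]
      by (rule scal_add[OF hc_end[OF HspaceD(1)[OF y] Ft[OF a]] hc_end[OF HspaceD(1)[OF y] Ft[OF b]]])
  next
    fix c a assume c: "c \<in> hom C I I" and a: "a \<in> hH t"
    show "psi y t (tnm C c a) = cmp C c (psi y t a)"
      unfolding psi_def Fsc[OF c a] hc_scr[OF c HspaceD(1)[OF y] Ft[OF a]]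
      by (rule scal_smul[OF c hc_end[OF HspaceD(1)[OF y] Ft[OF a]]])
  qed
  have TH: "T y \<in> Hspace C V \<and> supp (T y) \<subseteq> \<tau> ` supp y" if y: "y \<in> Hspace C V" for y
  proof -
    have sp: "supp (T y) \<subseteq> \<tau> ` supp y"
    proof
      fix t assume t: "t \<in> supp (T y)"
      have "\<tau> t \<in> supp y"
      proof (rule ccontr)
        assume "\<tau> t \<notin> supp y"
        then have z: "fst y (\<tau> t) = 0" "snd y (\<tau> t) = 0" unfolding supp_def by auto
        have "RH t (phi y t) = 0"
          by (rule RH_zero) (simp add: phi_def z hc_0r[OF Gt])
        moreover have "RC t (psi y t) = 0"
          by (rule RC_zero) (simp add: psi_def z hc_0l[OF Ft])
        ultimately show False using t unfolding supp_def T_def by simp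
      qed
      then show "t \<in> \<tau> ` supp y" using inv by (metis image_eqI)
    qed
    have "fst (T y) t \<in> hH t \<and> snd (T y) t \<in> cH t" for t
      unfolding T_def using RH_hom[OF Lphi[OF y]] RC_hom[OF Lpsi[OF y]] by simp
    moreover have "finite (supp (T y))" using finite_subset[OF sp] HspaceD(3)[OF y] by blast
    ultimately show ?thesis using sp unfolding Hspace_iff by blast
  qed
  have adj: "pform C V (opg \<tau> F G x) y = pform C V x (T y)" if x: "x \<in> Hspace C V" and y: "y \<in> Hspace C V" for x y
  proof -
    define S where "S = supp x \<union> \<tau> ` supp x \<union> supp y \<union> \<tau> ` supp y"
    have fS: "finite S" unfolding S_def using HspaceD(3)[OF x] HspaceD(3)[OF y] by simp
    have ii: "\<tau> ` \<tau> ` A = A" for A using inv by (simp add: image_image)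
    have tS: "\<tau> ` S = S" unfolding S_def image_Un ii by blast
    have inj: "inj_on \<tau> S" using inv by (metis inj_on_inverseI)
    note H1 = opg_H[of \<tau> x F G, OF inv x F0 G0 Ft Gt]
    note c = opg_comp[of \<tau> x F G, OF inv x F0 G0]
    have "pform C V (opg \<tau> F G x) y = (\<Sum>u\<in>S. pt (opg \<tau> F G x) y u)"
      by (rule pform_sum[OF H1(1) y fS]) (use H1(2) in \<open>auto simp: S_def\<close>)
    also have "\<dots> = (\<Sum>u\<in>\<tau> ` S. pt (opg \<tau> F G x) y u)" using tS by simp
    also have "\<dots> = (\<Sum>t\<in>S. pt (opg \<tau> F G x) y (\<tau> t))" using sum.reindex[OF inj] by simp
    also have "\<dots> = (\<Sum>t\<in>S. pt x (T y) t)"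
    proof (rule sum.cong[OF refl])
      fix t assume "t \<in> S"
      have "pt (opg \<tau> F G x) y (\<tau> t) = phi y t (snd x t) + psi y t (fst x t)"
        unfolding pt_def c inv phi_def psi_def ..
      also have "\<dots> = pt x (T y) t"
        unfolding pt_def T_def using RH_prop[OF Lphi[OF y] HspaceD(2)[OF x]] RC_prop[OF Lpsi[OF y] HspaceD(1)[OF x]]
        by (simp add: add.commute)
      finally show "pt (opg \<tau> F G x) y (\<tau> t) = pt x (T y) t" .
    qed
    also have "\<dots> = pform C V x (T y)"
      by (rule pform_sum[OF x conjunct1[OF TH[OF y]] fS, symmetric]) (use TH[OF y] in \<open>auto simp: S_def\<close>)
    finally show ?thesis .
  qed
  have lin: "hlinear C V T"
    unfolding hlinear_def
  proof (intro conjI ballI)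
    fix y assume "y \<in> Hspace C V" then show "T y \<in> Hspace C V" using TH by blast
  next
    fix y y' assume y: "y \<in> Hspace C V" and y': "y' \<in> Hspace C V"
    have "RH t (phi (y + y') t) = RH t (phi y t) + RH t (phi y' t)" for t
    proof (rule RH_lin)
      fix w assume w: "w \<in> cH t"
      show "phi (y + y') t w = phi y t w + phi y' t w"
        unfolding phi_def snd_add plus_fun_apply hc_addr[OF Gt[OF w] HspaceD(2)[OF y] HspaceD(2)[OF y']]
        by (rule scal_add[OF hc_end[OF Gt[OF w] HspaceD(2)[OF y]] hc_end[OF Gt[OF w] HspaceD(2)[OF y']]])
      show "phi y t w \<in> hom C I I" by (rule phig[OF y w])
      show "phi y' t w \<in> hom C I I" by (rule phig[OF y' w])
    qed
    moreover have "RC t (psi (y + y') t) = RC t (psi y t) + RC t (psi y' t)" for t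
    proof (rule RC_lin)
      fix w assume w: "w \<in> hH t"
      show "psi (y + y') t w = psi y t w + psi y' t w"
        unfolding psi_def fst_add plus_fun_apply hc_addl[OF HspaceD(1)[OF y] HspaceD(1)[OF y'] Ft[OF w]]
        by (rule scal_add[OF hc_end[OF HspaceD(1)[OF y] Ft[OF w]] hc_end[OF HspaceD(1)[OF y'] Ft[OF w]]])
      show "psi y t w \<in> hom C I I" by (rule psig[OF y w])
      show "psi y' t w \<in> hom C I I" by (rule psig[OF y' w])
    qed
    ultimately show "T (y + y') = T y + T y'" unfolding T_def by (simp add: fun_eq_iff)
  next
    fix c y assume c: "c \<in> hom C I I" and y: "y \<in> Hspace C V"
    have "RH t (phi (hsmul C c y) t) = tnm C c (RH t (phi y t))" for t
    proof (rule RH_sc[OF c])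
      fix w assume w: "w \<in> cH t"
      show "phi (hsmul C c y) t w = cmp C c (phi y t w)"
        unfolding phi_def hsmul_def snd_conv hc_scr[OF c Gt[OF w] HspaceD(2)[OF y]]
        by (rule scal_smul[OF c hc_end[OF Gt[OF w] HspaceD(2)[OF y]]])
      show "phi y t w \<in> hom C I I" by (rule phig[OF y w])
    qed
    moreover have "RC t (psi (hsmul C c y) t) = tnm C c (RC t (psi y t))" for t
    proof (rule RC_sc[OF c])
      fix w assume w: "w \<in> hH t"
      show "psi (hsmul C c y) t w = cmp C c (psi y t w)"
        unfolding psi_def hsmul_def fst_conv hc_scl[OF c HspaceD(1)[OF y] Ft[OF w]]
        by (rule scal_smul[OF c hc_end[OF HspaceD(1)[OF y] Ft[OF w]]])
      show "psi y t w \<in> hom C I I" by (rule psig[OF y w])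
    qed
    ultimately show "T (hsmul C c y) = hsmul C c (T y)" unfolding T_def hsmul_def by simp
  qed
  show ?thesis unfolding is_transpose_def using lin adj by blast
qed


lemma AH_add: "a \<in> hH t \<Longrightarrow> b \<in> hH t \<Longrightarrow> AH t (a + b) = AH t a + AH t b" by (cases t) (auto intro: Ah_lin(1)[OF _ _ idm_hom])
lemma AC_add: "a \<in> cH t \<Longrightarrow> b \<in> cH t \<Longrightarrow> AC t (a + b) = AC t a + AC t b" by (cases t) (auto intro: Ac_lin(1)[OF _ _ idm_hom])
lemma BH_add: "a \<in> hH t \<Longrightarrow> b \<in> hH t \<Longrightarrow> BH t (a + b) = BH t a + BH t b" by (cases t) (auto intro: Bh_lin(1)[OF _ _ idm_hom])
lemma BC_add: "a \<in> cH t \<Longrightarrow> b \<in> cH t \<Longrightarrow> BC t (a + b) = BC t a + BC t b" by (cases t) (auto intro: Bc_lin(1)[OF _ _ idm_hom])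
lemma AH_sc: "c \<in> hom C I I \<Longrightarrow> a \<in> hH t \<Longrightarrow> AH t (tnm C c a) = tnm C c (AH t a)" by (cases t) (auto intro: Ah_lin(2)[OF _ hom0])
lemma AC_sc: "c \<in> hom C I I \<Longrightarrow> a \<in> cH t \<Longrightarrow> AC t (tnm C c a) = tnm C c (AC t a)" by (cases t) (auto intro: Ac_lin(2)[OF _ hom0])
lemma BH_sc: "c \<in> hom C I I \<Longrightarrow> a \<in> hH t \<Longrightarrow> BH t (tnm C c a) = tnm C c (BH t a)" by (cases t) (auto intro: Bh_lin(2)[OF _ hom0])
lemma BC_sc: "c \<in> hom C I I \<Longrightarrow> a \<in> cH t \<Longrightarrow> BC t (tnm C c a) = tnm C c (BC t a)" by (cases t) (auto intro: Bc_lin(2)[OF _ hom0])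

lemma A_trans: "\<exists>T. is_transpose C V (opA C V st bb dd) T"
  unfolding opA_eq
  by (rule trans_gen) (auto intro: AH0 AC0 AH_typ AC_typ AH_add AC_add AH_sc AC_sc)
lemma B_trans: "\<exists>T. is_transpose C V (opB C V st bb dd) T"
  unfolding opB_eq
  by (rule trans_gen) (auto intro: BH0 BC0 BH_typ BC_typ BH_add BC_add BH_sc BC_sc)


lemma close_hat:
  assumes p: "p \<in> hom C I (tno C (V c) (V (st c)))"
  defines "P \<equiv> (I, tno C (V c) (V (st c)), p)"
  shows "scal C (V c) (snd (snd (cT C (tT C (iT C (V c)) (ddT (st c))) (tT C P (iT C (V c))))))
       = scal C (V (st c)) (snd (snd (cT C (tT C (ddT (st c)) (iT C (V (st c)))) (tT C (iT C (V (st c))) P))))"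
proof -
  have wP: "wt C P" using p by (simp add: P_def)
  have fP[simp]: "fst P = I" "fst (snd P) = tno C (V c) (V (st c))" "snd (snd P) = p" by (simp_all add: P_def)
  define L where "L = cT C (tT C (iT C (V c)) (ddT (st c))) (tT C P (iT C (V c)))"
  have wL: "wt C L" and fL[simp]: "fst L = V c" "fst (snd L) = V c" unfolding L_def using wP by simp_all
  have claim: "cT C (tT C L (iT C (V (st c)))) (bbT c) = P"
  proof -
    have "tT C L (iT C (V (st c))) = cT C (tT C (tT C (iT C (V c)) (ddT (st c))) (iT C (V (st c)))) (tT C (tT C P (iT C (V c))) (iT C (V (st c))))"
      unfolding L_def using wP by (subst tT_cT_l) simp_all
    also have "\<dots> = cT C (tT C (iT C (V c)) (tT C (ddT (st c)) (iT C (V (st c))))) (tT C P (iT C (tno C (V c) (V (st c)))))"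
      using wP by (simp add: tT_assoc tT_id)
    finally have e1: "tT C L (iT C (V (st c))) = \<dots>" .
    have e2: "cT C (tT C P (iT C (tno C (V c) (V (st c))))) (bbT c) = cT C (tT C (iT C (tno C (V c) (V (st c)))) (bbT c)) P"
    proof -
      have "cT C (tT C P (iT C (tno C (V c) (V (st c))))) (bbT c) = cT C (tT C P (iT C (tno C (V c) (V (st c))))) (tT C (iT C I) (bbT c))"
        by (simp add: tT_unitl)
      also have "\<dots> = tT C P (bbT c)" using wP by (subst xchg) (simp_all add: cT_idl cT_idr)
      also have "\<dots> = cT C (tT C (iT C (tno C (V c) (V (st c)))) (bbT c)) (tT C P (iT C I))"
        using wP by (subst slide1) simp_all
      also have "\<dots> = cT C (tT C (iT C (tno C (V c) (V (st c)))) (bbT c)) P" using wP by (simp add: tT_unitr)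
      finally show ?thesis .
    qed
    have e3: "cT C (tT C (iT C (V c)) (tT C (ddT (st c)) (iT C (V (st c))))) (tT C (iT C (tno C (V c) (V (st c)))) (bbT c))
        = iT C (tno C (V c) (V (st c)))"
    proof -
      have "tT C (iT C (tno C (V c) (V (st c)))) (bbT c) = tT C (iT C (V c)) (tT C (iT C (V (st c))) (bbT c))"
        by (simp add: tT_assoc tT_id[symmetric])
      moreover have "cT C (tT C (iT C (V c)) (tT C (ddT (st c)) (iT C (V (st c))))) (tT C (iT C (V c)) (tT C (iT C (V (st c))) (bbT c)))
         = tT C (iT C (V c)) (cT C (tT C (ddT (st c)) (iT C (V (st c)))) (tT C (iT C (V (st c))) (bbT c)))"
        by (subst tT_cT_r) simp_all
      moreover have "cT C (tT C (ddT (st c)) (iT C (V (st c)))) (tT C (iT C (V (st c))) (bbT c)) = iT C (V (st c))"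
        using zig2[of "st c"] by simp
      ultimately show ?thesis by (simp add: tT_id)
    qed
    have "cT C (tT C L (iT C (V (st c)))) (bbT c) = cT C (tT C (iT C (V c)) (tT C (ddT (st c)) (iT C (V (st c)))))
        (cT C (tT C P (iT C (tno C (V c) (V (st c))))) (bbT c))"
      unfolding e1 using wP by (subst cT_assoc) simp_all
    also have "\<dots> = cT C (tT C (iT C (V c)) (tT C (ddT (st c)) (iT C (V (st c)))))
        (cT C (tT C (iT C (tno C (V c) (V (st c)))) (bbT c)) P)" unfolding e2 ..
    also have "\<dots> = cT C (cT C (tT C (iT C (V c)) (tT C (ddT (st c)) (iT C (V (st c))))) (tT C (iT C (tno C (V c) (V (st c)))) (bbT c))) P"
      using wP by (subst cT_assoc) simp_all
    also have "\<dots> = P" unfolding e3 using wP by (simp add: cT_idl)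
    finally show ?thesis .
  qed
  define f where "f = snd (snd L)"
  have f: "f \<in> hom C (V c) (V c)" using wL unfolding f_def wt_def by simp
  define \<kappa> where "\<kappa> = scal C (V c) f"
  have \<kappa>: "\<kappa> \<in> hom C I I" "tnm C \<kappa> (idm C (V c)) = f" using endV[OF f] unfolding \<kappa>_def by simp_all
  have pk: "p = tnm C \<kappa> (bb c)"
  proof -
    have "p = cmp C (tnm C f (idm C (V (st c)))) (bb c)" using arg_cong[OF claim, of "\<lambda>x. snd (snd x)"] unfolding f_def by simp
    also have "\<dots> = cmp C (tnm C \<kappa> (idm C (tno C (V c) (V (st c))))) (bb c)"
      using \<kappa> tnm_scl[OF \<kappa>(1) idm_hom[of "V c"] idm_hom[of "V (st c)"]] by simp
    also have "\<dots> = tnm C \<kappa> (bb c)" using cmp_scl[OF \<kappa>(1) bb_hom[of c] idm_hom] cmp_idl[OF bb_hom[of c]] by simp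
    finally show ?thesis .
  qed
  have R: "snd (snd (cT C (tT C (ddT (st c)) (iT C (V (st c)))) (tT C (iT C (V (st c))) P))) = tnm C \<kappa> (idm C (V (st c)))"
  proof -
    have "snd (snd (cT C (tT C (ddT (st c)) (iT C (V (st c)))) (tT C (iT C (V (st c))) P)))
       = cmp C (tnm C (dd (st c)) (idm C (V (st c)))) (tnm C (idm C (V (st c))) (tnm C \<kappa> (bb c)))" using pk by simp
    also have "\<dots> = cmp C (tnm C (dd (st c)) (idm C (V (st c)))) (tnm C \<kappa> (tnm C (idm C (V (st c))) (bb c)))"
      using tnm_scr[OF \<kappa>(1) idm_hom bb_hom] by simp
    also have "\<dots> = tnm C \<kappa> (cmp C (tnm C (dd (st c)) (idm C (V (st c)))) (tnm C (idm C (V (st c))) (bb c)))"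
      using cmp_scr[OF \<kappa>(1) tnm_hom[OF idm_hom[of "V (st c)"] bb_hom[of c], simplified] tnm_hom[OF dd_hom[of "st c"] idm_hom[of "V (st c)"], simplified]]
      by simp
    also have "\<dots> = tnm C \<kappa> (idm C (V (st c)))" using zig_raw(2)[of "st c"] by simp
    finally show ?thesis .
  qed
  show ?thesis unfolding R using \<kappa>(1) unfolding L_def[symmetric] f_def[symmetric] \<kappa>_def[symmetric] by simp
qed


lemma close_chk:
  assumes p: "p \<in> hom C (tno C (V c) (V (st c))) I"
  defines "P \<equiv> (tno C (V c) (V (st c)), I, p)"
  shows "scal C (V c) (snd (snd (cT C (tT C P (iT C (V c))) (tT C (iT C (V c)) (bbT (st c))))))
       = scal C (V (st c)) (snd (snd (cT C (tT C (iT C (V (st c))) P) (tT C (bbT (st c)) (iT C (V (st c)))))))"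
proof -
  have wP: "wt C P" using p by (simp add: P_def)
  have fP[simp]: "fst P = tno C (V c) (V (st c))" "fst (snd P) = I" "snd (snd P) = p" by (simp_all add: P_def)
  define L where "L = cT C (tT C P (iT C (V c))) (tT C (iT C (V c)) (bbT (st c)))"
  have wL: "wt C L" and fL[simp]: "fst L = V c" "fst (snd L) = V c" unfolding L_def using wP by simp_all
  have claim: "cT C (ddT c) (tT C L (iT C (V (st c)))) = P"
  proof -
    have "tT C L (iT C (V (st c))) = cT C (tT C (tT C P (iT C (V c))) (iT C (V (st c)))) (tT C (tT C (iT C (V c)) (bbT (st c))) (iT C (V (st c))))"
      unfolding L_def using wP by (subst tT_cT_l) simp_all
    also have "\<dots> = cT C (tT C P (iT C (tno C (V c) (V (st c))))) (tT C (iT C (V c)) (tT C (bbT (st c)) (iT C (V (st c)))))"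
      using wP by (simp add: tT_assoc tT_id)
    finally have e1: "tT C L (iT C (V (st c))) = \<dots>" .
    have e2: "cT C (ddT c) (tT C P (iT C (tno C (V c) (V (st c))))) = cT C P (tT C (iT C (tno C (V c) (V (st c)))) (ddT c))"
    proof -
      have "cT C (ddT c) (tT C P (iT C (tno C (V c) (V (st c))))) = cT C (tT C (iT C I) (ddT c)) (tT C P (iT C (tno C (V c) (V (st c)))))"
        by (simp add: tT_unitl)
      also have "\<dots> = tT C P (ddT c)" using wP by (subst xchg) (simp_all add: cT_idl cT_idr)
      also have "\<dots> = cT C (tT C P (iT C I)) (tT C (iT C (tno C (V c) (V (st c)))) (ddT c))"
        using wP by (subst slide2) simp_all
      also have "\<dots> = cT C P (tT C (iT C (tno C (V c) (V (st c)))) (ddT c))" using wP by (simp add: tT_unitr)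
      finally show ?thesis .
    qed
    have e3: "cT C (tT C (iT C (tno C (V c) (V (st c)))) (ddT c)) (tT C (iT C (V c)) (tT C (bbT (st c)) (iT C (V (st c)))))
        = iT C (tno C (V c) (V (st c)))"
    proof -
      have "tT C (iT C (tno C (V c) (V (st c)))) (ddT c) = tT C (iT C (V c)) (tT C (iT C (V (st c))) (ddT c))"
        by (simp add: tT_assoc tT_id[symmetric])
      moreover have "cT C (tT C (iT C (V c)) (tT C (iT C (V (st c))) (ddT c))) (tT C (iT C (V c)) (tT C (bbT (st c)) (iT C (V (st c)))))
         = tT C (iT C (V c)) (cT C (tT C (iT C (V (st c))) (ddT c)) (tT C (bbT (st c)) (iT C (V (st c)))))"
        by (subst tT_cT_r) simp_all
      moreover have "cT C (tT C (iT C (V (st c))) (ddT c)) (tT C (bbT (st c)) (iT C (V (st c)))) = iT C (V (st c))"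
        using zig1[of "st c"] by simp
      ultimately show ?thesis by (simp add: tT_id)
    qed
    have "cT C (ddT c) (tT C L (iT C (V (st c)))) = cT C (cT C (ddT c) (tT C P (iT C (tno C (V c) (V (st c))))))
        (tT C (iT C (V c)) (tT C (bbT (st c)) (iT C (V (st c)))))"
      unfolding e1 using wP by (subst cT_assoc) simp_all
    also have "\<dots> = cT C (cT C P (tT C (iT C (tno C (V c) (V (st c)))) (ddT c)))
        (tT C (iT C (V c)) (tT C (bbT (st c)) (iT C (V (st c)))))" unfolding e2 ..
    also have "\<dots> = cT C P (cT C (tT C (iT C (tno C (V c) (V (st c)))) (ddT c)) (tT C (iT C (V c)) (tT C (bbT (st c)) (iT C (V (st c))))))"
      using wP by (subst cT_assoc) simp_all
    also have "\<dots> = P" unfolding e3 using wP by (simp add: cT_idr)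
    finally show ?thesis .
  qed
  define f where "f = snd (snd L)"
  have f: "f \<in> hom C (V c) (V c)" using wL unfolding f_def wt_def by simp
  define \<kappa> where "\<kappa> = scal C (V c) f"
  have \<kappa>: "\<kappa> \<in> hom C I I" "tnm C \<kappa> (idm C (V c)) = f" using endV[OF f] unfolding \<kappa>_def by simp_all
  have pk: "p = tnm C \<kappa> (dd c)"
  proof -
    have "p = cmp C (dd c) (tnm C f (idm C (V (st c))))" using arg_cong[OF claim, of "\<lambda>x. snd (snd x)"] unfolding f_def by simp
    also have "\<dots> = cmp C (dd c) (tnm C \<kappa> (idm C (tno C (V c) (V (st c)))))"
      using \<kappa> tnm_scl[OF \<kappa>(1) idm_hom[of "V c"] idm_hom[of "V (st c)"]] by simp
    also have "\<dots> = tnm C \<kappa> (dd c)" using cmp_scr[OF \<kappa>(1) idm_hom dd_hom[of c]] cmp_idr[OF dd_hom[of c]] by simp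
    finally show ?thesis .
  qed
  have R: "snd (snd (cT C (tT C (iT C (V (st c))) P) (tT C (bbT (st c)) (iT C (V (st c)))))) = tnm C \<kappa> (idm C (V (st c)))"
  proof -
    have "snd (snd (cT C (tT C (iT C (V (st c))) P) (tT C (bbT (st c)) (iT C (V (st c))))))
       = cmp C (tnm C (idm C (V (st c))) (tnm C \<kappa> (dd c))) (tnm C (bb (st c)) (idm C (V (st c))))" using pk by simp
    also have "\<dots> = cmp C (tnm C \<kappa> (tnm C (idm C (V (st c))) (dd c))) (tnm C (bb (st c)) (idm C (V (st c))))"
      using tnm_scr[OF \<kappa>(1) idm_hom dd_hom] by simp
    also have "\<dots> = tnm C \<kappa> (cmp C (tnm C (idm C (V (st c))) (dd c)) (tnm C (bb (st c)) (idm C (V (st c)))))"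
      using cmp_scl[OF \<kappa>(1) tnm_hom[OF bb_hom[of "st c"] idm_hom[of "V (st c)"], simplified] tnm_hom[OF idm_hom[of "V (st c)"] dd_hom[of c], simplified]]
      by simp
    also have "\<dots> = tnm C \<kappa> (idm C (V (st c)))" using zig_raw(1)[of "st c"] by simp
    finally show ?thesis .
  qed
  show ?thesis unfolding R using \<kappa>(1) unfolding L_def[symmetric] f_def[symmetric] \<kappa>_def[symmetric] by simp
qed


section \<open>hat-hat identity\<close>

lemma hh_main:
  assumes x: "x \<in> hom C (tno C (V a) (V b)) (V c)" and z: "z \<in> hom C (tno C (V (st b)) (V (st a))) (V (st c))"
  shows "scal C (V c) (cmp C x (Ah (st a) c (Bc b (st c) (Ah (st b) (st a) z))))
       = scal C (V (st c)) (cmp C z (Bh (st c) a (Ac c (st b) (Bh a b x))))"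
proof -
  let ?a = "V a" and ?b = "V b" and ?c = "V c" and ?a' = "V (st a)" and ?b' = "V (st b)" and ?c' = "V (st c)"
  let ?X = "(tno C ?a ?b, ?c, x)" and ?Z = "(tno C ?b' ?a', ?c', z)"
  have wX: "wt C ?X" and wZ: "wt C ?Z" using x z by simp_all
  let ?K = "tT C (iT C ?a) (tT C (bbT b) (iT C ?a'))"
  let ?Psi = "cT C (tT C ?X ?Z) (cT C ?K (bbT a))"
  let ?P = "cT C (tT C (iT C ?b) ?Z) (tT C (bbT b) (iT C ?a'))"
  let ?A1 = "tT C (iT C ?a) (tT C (iT C ?b) (ddT (st c)))"
  let ?A2 = "tT C (iT C ?a) (tT C ?P (iT C ?c))"
  let ?A3 = "tT C (bbT a) (iT C ?c)"
  have wP: "wt C ?P" using wZ by simp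
  have L0: "cT C ?X (AhT (st a) c (BcT b (st c) (AhT (st b) (st a) ?Z)))
     = cT C ?X (cT C (tT C (iT C ?a) (cT C (tT C (iT C ?b) (ddT (st c))) (tT C ?P (iT C ?c)))) ?A3)"
    unfolding AhT_def BcT_def by simp
  have L1: "tT C (iT C ?a) (cT C (tT C (iT C ?b) (ddT (st c))) (tT C ?P (iT C ?c))) = cT C ?A1 ?A2"
    using wP by (subst tT_cT_r) simp_all
  have L2: "cT C ?X (cT C (cT C ?A1 ?A2) ?A3) = cT C (cT C (cT C ?X ?A1) ?A2) ?A3"
    using wX wP by (simp add: cT_assoc)
  have L3: "cT C ?X ?A1 = cT C (tT C (iT C ?c) (ddT (st c))) (tT C ?X (iT C (tno C ?c' ?c)))"
  proof -
    have "?A1 = tT C (iT C (tno C ?a ?b)) (ddT (st c))" by (simp add: tT_assoc[symmetric] tT_id)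
    moreover have "cT C ?X (tT C (iT C (tno C ?a ?b)) (ddT (st c))) = cT C (tT C ?X (iT C I)) (tT C (iT C (tno C ?a ?b)) (ddT (st c)))"
      using wX by (simp add: tT_unitr)
    moreover have "\<dots> = tT C ?X (ddT (st c))" using wX by (subst xchg) (simp_all add: cT_idl cT_idr)
    moreover have "\<dots> = cT C (tT C (iT C ?c) (ddT (st c))) (tT C ?X (iT C (tno C ?c' ?c)))"
      using wX by (subst slide1) simp_all
    ultimately show ?thesis by simp
  qed
  let ?D = "tT C (iT C ?c) (ddT (st c))" and ?M = "tT C ?X (iT C (tno C ?c' ?c))"
  have L4: "cT C (cT C (cT C ?D ?M) ?A2) ?A3 = cT C ?D (cT C ?M (cT C ?A2 ?A3))"
    using wX wP by (simp add: cT_assoc)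
  let ?R1 = "cT C (tT C (iT C ?a) ?P) (bbT a)"
  have L5: "cT C ?A2 ?A3 = tT C ?R1 (iT C ?c)"
  proof -
    have "?A2 = tT C (tT C (iT C ?a) ?P) (iT C ?c)" using wP by (simp add: tT_assoc)
    moreover have "cT C (tT C (tT C (iT C ?a) ?P) (iT C ?c)) ?A3 = tT C ?R1 (iT C ?c)"
      using wP by (subst xchg) (simp_all add: cT_idl)
    ultimately show ?thesis by simp
  qed
  let ?Psi1 = "cT C (tT C ?X (iT C ?c')) ?R1"
  have L6: "cT C ?M (tT C ?R1 (iT C ?c)) = tT C ?Psi1 (iT C ?c)"
  proof -
    have "?M = tT C (tT C ?X (iT C ?c')) (iT C ?c)" using wX by (simp add: tT_assoc tT_id)
    moreover have "cT C (tT C (tT C ?X (iT C ?c')) (iT C ?c)) (tT C ?R1 (iT C ?c)) = tT C ?Psi1 (iT C ?c)"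
      using wX wP by (subst xchg) (simp_all add: cT_idl)
    ultimately show ?thesis by simp
  qed
  have P1: "?Psi1 = ?Psi"
  proof -
    have "tT C (iT C ?a) ?P = cT C (tT C (iT C ?a) (tT C (iT C ?b) ?Z)) ?K"
      using wZ by (subst tT_cT_r) simp_all
    also have "tT C (iT C ?a) (tT C (iT C ?b) ?Z) = tT C (iT C (tno C ?a ?b)) ?Z"
      using wZ by (simp add: tT_assoc[symmetric] tT_id)
    finally have e: "tT C (iT C ?a) ?P = cT C (tT C (iT C (tno C ?a ?b)) ?Z) ?K" .
    have "?Psi1 = cT C (tT C ?X (iT C ?c')) (cT C (cT C (tT C (iT C (tno C ?a ?b)) ?Z) ?K) (bbT a))"
      unfolding e ..
    also have "\<dots> = cT C (cT C (tT C ?X (iT C ?c')) (tT C (iT C (tno C ?a ?b)) ?Z)) (cT C ?K (bbT a))"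
      using wX wZ by (simp add: cT_assoc)
    also have "cT C (tT C ?X (iT C ?c')) (tT C (iT C (tno C ?a ?b)) ?Z) = tT C ?X ?Z"
      using wX wZ by (subst xchg) (simp_all add: cT_idl cT_idr)
    finally show ?thesis .
  qed
  have LHS: "cT C ?X (AhT (st a) c (BcT b (st c) (AhT (st b) (st a) ?Z))) = cT C ?D (tT C ?Psi (iT C ?c))"
    unfolding L0 L1 L2 L3 L4 L5 L6 P1 ..
  let ?g = "cT C (tT C ?X (iT C ?b')) (tT C (iT C ?a) (bbT b))"
  let ?E1 = "tT C (tT C (ddT (st c)) (iT C ?b')) (iT C ?a')"
  let ?E2 = "tT C (tT C (iT C ?c') ?g) (iT C ?a')"
  let ?E3 = "tT C (iT C ?c') (bbT a)"
  have wg: "wt C ?g" using wX by simp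
  have R0: "cT C ?Z (BhT (st c) a (AcT c (st b) (BhT a b ?X)))
     = cT C ?Z (cT C (tT C (cT C (tT C (ddT (st c)) (iT C ?b')) (tT C (iT C ?c') ?g)) (iT C ?a')) ?E3)"
    unfolding AcT_def BhT_def by simp
  have R1: "tT C (cT C (tT C (ddT (st c)) (iT C ?b')) (tT C (iT C ?c') ?g)) (iT C ?a') = cT C ?E1 ?E2"
    using wg by (subst tT_cT_l) simp_all
  have R2: "cT C ?Z (cT C (cT C ?E1 ?E2) ?E3) = cT C (cT C (cT C ?Z ?E1) ?E2) ?E3"
    using wZ wg by (simp add: cT_assoc)
  have R3: "cT C ?Z ?E1 = cT C (tT C (ddT (st c)) (iT C ?c')) (tT C (iT C (tno C ?c' ?c)) ?Z)"
  proof -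
    have "?E1 = tT C (ddT (st c)) (iT C (tno C ?b' ?a'))" by (simp add: tT_assoc tT_id)
    moreover have "cT C ?Z (tT C (ddT (st c)) (iT C (tno C ?b' ?a'))) = cT C (tT C (iT C I) ?Z) (tT C (ddT (st c)) (iT C (tno C ?b' ?a')))"
      using wZ by (simp add: tT_unitl)
    moreover have "\<dots> = tT C (ddT (st c)) ?Z" using wZ by (subst xchg) (simp_all add: cT_idl cT_idr)
    moreover have "\<dots> = cT C (tT C (ddT (st c)) (iT C ?c')) (tT C (iT C (tno C ?c' ?c)) ?Z)"
      using wZ by (subst slide2) simp_all
    ultimately show ?thesis by simp
  qed
  let ?D' = "tT C (ddT (st c)) (iT C ?c')" and ?M' = "tT C (iT C (tno C ?c' ?c)) ?Z"
  have R4: "cT C (cT C (cT C ?D' ?M') ?E2) ?E3 = cT C ?D' (cT C ?M' (cT C ?E2 ?E3))"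
    using wZ wg by (simp add: cT_assoc)
  let ?S2 = "cT C (tT C ?g (iT C ?a')) (bbT a)"
  have R5: "cT C ?E2 ?E3 = tT C (iT C ?c') ?S2"
  proof -
    have "?E2 = tT C (iT C ?c') (tT C ?g (iT C ?a'))" using wg by (simp add: tT_assoc)
    moreover have "cT C (tT C (iT C ?c') (tT C ?g (iT C ?a'))) ?E3 = tT C (iT C ?c') ?S2"
      using wg by (subst tT_cT_r) simp_all
    ultimately show ?thesis by simp
  qed
  let ?Psi2 = "cT C (tT C (iT C ?c) ?Z) ?S2"
  have R6: "cT C ?M' (tT C (iT C ?c') ?S2) = tT C (iT C ?c') ?Psi2"
  proof -
    have "?M' = tT C (iT C ?c') (tT C (iT C ?c) ?Z)" using wZ by (simp add: tT_assoc[symmetric] tT_id)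
    moreover have "cT C (tT C (iT C ?c') (tT C (iT C ?c) ?Z)) (tT C (iT C ?c') ?S2) = tT C (iT C ?c') ?Psi2"
      using wZ wg by (subst tT_cT_r) simp_all
    ultimately show ?thesis by simp
  qed
  have P2: "?Psi2 = ?Psi"
  proof -
    have "tT C ?g (iT C ?a') = cT C (tT C (tT C ?X (iT C ?b')) (iT C ?a')) (tT C (tT C (iT C ?a) (bbT b)) (iT C ?a'))"
      using wX by (subst tT_cT_l) simp_all
    also have "\<dots> = cT C (tT C ?X (iT C (tno C ?b' ?a'))) ?K"
      using wX by (simp add: tT_assoc tT_id)
    finally have e: "tT C ?g (iT C ?a') = cT C (tT C ?X (iT C (tno C ?b' ?a'))) ?K" .
    have "?Psi2 = cT C (tT C (iT C ?c) ?Z) (cT C (cT C (tT C ?X (iT C (tno C ?b' ?a'))) ?K) (bbT a))"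
      unfolding e ..
    also have "\<dots> = cT C (cT C (tT C (iT C ?c) ?Z) (tT C ?X (iT C (tno C ?b' ?a')))) (cT C ?K (bbT a))"
      using wX wZ by (simp add: cT_assoc)
    also have "cT C (tT C (iT C ?c) ?Z) (tT C ?X (iT C (tno C ?b' ?a'))) = tT C ?X ?Z"
      using wX wZ by (subst xchg) (simp_all add: cT_idl cT_idr)
    finally show ?thesis .
  qed
  have RHS: "cT C ?Z (BhT (st c) a (AcT c (st b) (BhT a b ?X))) = cT C ?D' (tT C (iT C ?c') ?Psi)"
    unfolding R0 R1 R2 R3 R4 R5 R6 P2 ..
  have wPsi: "wt C ?Psi" using wX wZ by simp
  have Pe: "?Psi = (I, tno C ?c ?c', snd (snd ?Psi))" by (rule triple_eq) simp_all
  have p: "snd (snd ?Psi) \<in> hom C I (tno C ?c ?c')" using wPsi unfolding wt_def by simp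
  have "scal C ?c (snd (snd (cT C ?D (tT C ?Psi (iT C ?c))))) = scal C ?c' (snd (snd (cT C ?D' (tT C (iT C ?c') ?Psi))))"
    using close_hat[OF p] Pe by simp
  then show ?thesis using arg_cong[OF LHS, of "\<lambda>t. snd (snd t)"] arg_cong[OF RHS, of "\<lambda>t. snd (snd t)"] by simp
qed


section \<open>check-check identity\<close>

lemma cc_main:
  assumes y: "y \<in> hom C (V c) (tno C (V a) (V b))" and w: "w \<in> hom C (V (st c)) (tno C (V (st b)) (V (st a)))"
  shows "scal C (V c) (cmp C (Ac (st a) c (Bh b (st c) (Ac (st b) (st a) w))) y)
       = scal C (V (st c)) (cmp C (Bc (st c) a (Ah c (st b) (Bc a b y))) w)"
proof -
  let ?a = "V a" and ?b = "V b" and ?c = "V c" and ?a' = "V (st a)" and ?b' = "V (st b)" and ?c' = "V (st c)"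
  let ?Y = "(?c, tno C ?a ?b, y)" and ?W = "(?c', tno C ?b' ?a', w)"
  have wY: "wt C ?Y" and wW: "wt C ?W" using y w by simp_all
  let ?K = "tT C (iT C ?a) (tT C (ddT b) (iT C ?a'))"
  let ?Om = "cT C (cT C (ddT a) ?K) (tT C ?Y ?W)"
  let ?h = "cT C (tT C (ddT b) (iT C ?a')) (tT C (iT C ?b) ?W)"
  let ?A1 = "tT C (ddT a) (iT C ?c)"
  let ?B1 = "tT C (iT C ?a) (tT C ?h (iT C ?c))"
  let ?B2 = "tT C (iT C ?a) (tT C (iT C ?b) (bbT (st c)))"
  have wh: "wt C ?h" using wW by simp
  have L0: "cT C (AcT (st a) c (BhT b (st c) (AcT (st b) (st a) ?W))) ?Y
     = cT C (cT C ?A1 (tT C (iT C ?a) (cT C (tT C ?h (iT C ?c)) (tT C (iT C ?b) (bbT (st c)))))) ?Y"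
    unfolding AcT_def BhT_def by simp
  have L1: "tT C (iT C ?a) (cT C (tT C ?h (iT C ?c)) (tT C (iT C ?b) (bbT (st c)))) = cT C ?B1 ?B2"
    using wh by (subst tT_cT_r) simp_all
  have L2: "cT C (cT C ?A1 (cT C ?B1 ?B2)) ?Y = cT C (cT C ?A1 ?B1) (cT C ?B2 ?Y)"
    using wY wh by (simp add: cT_assoc)
  let ?O0 = "cT C (ddT a) (tT C (iT C ?a) ?h)"
  have L3: "cT C ?A1 ?B1 = tT C ?O0 (iT C ?c)"
  proof -
    have "?B1 = tT C (tT C (iT C ?a) ?h) (iT C ?c)" using wh by (simp add: tT_assoc)
    moreover have "cT C ?A1 (tT C (tT C (iT C ?a) ?h) (iT C ?c)) = tT C ?O0 (iT C ?c)"
      using wh by (subst xchg) (simp_all add: cT_idl)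
    ultimately show ?thesis by simp
  qed
  have L4: "cT C ?B2 ?Y = cT C (tT C ?Y (iT C (tno C ?c' ?c))) (tT C (iT C ?c) (bbT (st c)))"
  proof -
    have "?B2 = tT C (iT C (tno C ?a ?b)) (bbT (st c))" by (simp add: tT_assoc[symmetric] tT_id)
    moreover have "cT C (tT C (iT C (tno C ?a ?b)) (bbT (st c))) ?Y = cT C (tT C (iT C (tno C ?a ?b)) (bbT (st c))) (tT C ?Y (iT C I))"
      using wY by (simp add: tT_unitr)
    moreover have "\<dots> = tT C ?Y (bbT (st c))" using wY by (subst xchg) (simp_all add: cT_idl cT_idr)
    moreover have "\<dots> = cT C (tT C ?Y (iT C (tno C ?c' ?c))) (tT C (iT C ?c) (bbT (st c)))"
      using wY by (subst slide2) simp_all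
    ultimately show ?thesis by simp
  qed
  let ?M = "tT C ?Y (iT C (tno C ?c' ?c))" and ?K2 = "tT C (iT C ?c) (bbT (st c))"
  have L5: "cT C (tT C ?O0 (iT C ?c)) (cT C ?M ?K2) = cT C (cT C (tT C ?O0 (iT C ?c)) ?M) ?K2"
    using wY wh by (simp add: cT_assoc)
  let ?O1 = "cT C ?O0 (tT C ?Y (iT C ?c'))"
  have L6: "cT C (tT C ?O0 (iT C ?c)) ?M = tT C ?O1 (iT C ?c)"
  proof -
    have "?M = tT C (tT C ?Y (iT C ?c')) (iT C ?c)" using wY by (simp add: tT_assoc tT_id)
    moreover have "cT C (tT C ?O0 (iT C ?c)) (tT C (tT C ?Y (iT C ?c')) (iT C ?c)) = tT C ?O1 (iT C ?c)"
      using wY wh by (subst xchg) (simp_all add: cT_idl)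
    ultimately show ?thesis by simp
  qed
  have P1: "?O1 = ?Om"
  proof -
    have "tT C (iT C ?a) ?h = cT C ?K (tT C (iT C ?a) (tT C (iT C ?b) ?W))"
      using wW by (subst tT_cT_r) simp_all
    also have "tT C (iT C ?a) (tT C (iT C ?b) ?W) = tT C (iT C (tno C ?a ?b)) ?W"
      using wW by (simp add: tT_assoc[symmetric] tT_id)
    finally have e: "tT C (iT C ?a) ?h = cT C ?K (tT C (iT C (tno C ?a ?b)) ?W)" .
    have "?O1 = cT C (cT C (ddT a) (cT C ?K (tT C (iT C (tno C ?a ?b)) ?W))) (tT C ?Y (iT C ?c'))"
      unfolding e ..
    also have "\<dots> = cT C (cT C (ddT a) ?K) (cT C (tT C (iT C (tno C ?a ?b)) ?W) (tT C ?Y (iT C ?c')))"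
      using wY wW by (simp add: cT_assoc)
    also have "cT C (tT C (iT C (tno C ?a ?b)) ?W) (tT C ?Y (iT C ?c')) = tT C ?Y ?W"
      using wY wW by (subst xchg) (simp_all add: cT_idl cT_idr)
    finally show ?thesis .
  qed
  have LHS: "cT C (AcT (st a) c (BhT b (st c) (AcT (st b) (st a) ?W))) ?Y = cT C (tT C ?Om (iT C ?c)) ?K2"
    unfolding L0 L1 L2 L3 L4 L5 L6 P1 ..
  let ?h' = "cT C (tT C (iT C ?a) (ddT b)) (tT C ?Y (iT C ?b'))"
  let ?A1' = "tT C (iT C ?c') (ddT a)"
  let ?B1' = "tT C (tT C (iT C ?c') ?h') (iT C ?a')"
  let ?B2' = "tT C (tT C (bbT (st c)) (iT C ?b')) (iT C ?a')"
  have wh': "wt C ?h'" using wY by simp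
  have R0: "cT C (BcT (st c) a (AhT c (st b) (BcT a b ?Y))) ?W
     = cT C (cT C ?A1' (tT C (cT C (tT C (iT C ?c') ?h') (tT C (bbT (st c)) (iT C ?b'))) (iT C ?a'))) ?W"
    unfolding AhT_def BcT_def by simp
  have R1: "tT C (cT C (tT C (iT C ?c') ?h') (tT C (bbT (st c)) (iT C ?b'))) (iT C ?a') = cT C ?B1' ?B2'"
    using wh' by (subst tT_cT_l) simp_all
  have R2: "cT C (cT C ?A1' (cT C ?B1' ?B2')) ?W = cT C (cT C ?A1' ?B1') (cT C ?B2' ?W)"
    using wW wh' by (simp add: cT_assoc)
  let ?O0' = "cT C (ddT a) (tT C ?h' (iT C ?a'))"
  have R3: "cT C ?A1' ?B1' = tT C (iT C ?c') ?O0'"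
  proof -
    have "?B1' = tT C (iT C ?c') (tT C ?h' (iT C ?a'))" using wh' by (simp add: tT_assoc)
    moreover have "cT C ?A1' (tT C (iT C ?c') (tT C ?h' (iT C ?a'))) = tT C (iT C ?c') ?O0'"
      using wh' by (subst tT_cT_r) simp_all
    ultimately show ?thesis by simp
  qed
  have R4: "cT C ?B2' ?W = cT C (tT C (iT C (tno C ?c' ?c)) ?W) (tT C (bbT (st c)) (iT C ?c'))"
  proof -
    have "?B2' = tT C (bbT (st c)) (iT C (tno C ?b' ?a'))" by (simp add: tT_assoc tT_id)
    moreover have "cT C (tT C (bbT (st c)) (iT C (tno C ?b' ?a'))) ?W = cT C (tT C (bbT (st c)) (iT C (tno C ?b' ?a'))) (tT C (iT C I) ?W)"
      using wW by (simp add: tT_unitl)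
    moreover have "\<dots> = tT C (bbT (st c)) ?W" using wW by (subst xchg) (simp_all add: cT_idl cT_idr)
    moreover have "\<dots> = cT C (tT C (iT C (tno C ?c' ?c)) ?W) (tT C (bbT (st c)) (iT C ?c'))"
      using wW by (subst slide1) simp_all
    ultimately show ?thesis by simp
  qed
  let ?M' = "tT C (iT C (tno C ?c' ?c)) ?W" and ?K2' = "tT C (bbT (st c)) (iT C ?c')"
  have R5: "cT C (tT C (iT C ?c') ?O0') (cT C ?M' ?K2') = cT C (cT C (tT C (iT C ?c') ?O0') ?M') ?K2'"
    using wW wh' by (simp add: cT_assoc)
  let ?O2 = "cT C ?O0' (tT C (iT C ?c) ?W)"
  have R6: "cT C (tT C (iT C ?c') ?O0') ?M' = tT C (iT C ?c') ?O2"
  proof -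
    have "?M' = tT C (iT C ?c') (tT C (iT C ?c) ?W)" using wW by (simp add: tT_assoc[symmetric] tT_id)
    moreover have "cT C (tT C (iT C ?c') ?O0') (tT C (iT C ?c') (tT C (iT C ?c) ?W)) = tT C (iT C ?c') ?O2"
      using wW wh' by (subst tT_cT_r) simp_all
    ultimately show ?thesis by simp
  qed
  have P2: "?O2 = ?Om"
  proof -
    have "tT C ?h' (iT C ?a') = cT C (tT C (tT C (iT C ?a) (ddT b)) (iT C ?a')) (tT C (tT C ?Y (iT C ?b')) (iT C ?a'))"
      using wY by (subst tT_cT_l) simp_all
    also have "\<dots> = cT C ?K (tT C ?Y (iT C (tno C ?b' ?a')))"
      using wY by (simp add: tT_assoc tT_id)
    finally have e: "tT C ?h' (iT C ?a') = cT C ?K (tT C ?Y (iT C (tno C ?b' ?a')))" .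
    have "?O2 = cT C (cT C (ddT a) (cT C ?K (tT C ?Y (iT C (tno C ?b' ?a'))))) (tT C (iT C ?c) ?W)"
      unfolding e ..
    also have "\<dots> = cT C (cT C (ddT a) ?K) (cT C (tT C ?Y (iT C (tno C ?b' ?a'))) (tT C (iT C ?c) ?W))"
      using wY wW by (simp add: cT_assoc)
    also have "cT C (tT C ?Y (iT C (tno C ?b' ?a'))) (tT C (iT C ?c) ?W) = tT C ?Y ?W"
      using wY wW by (subst xchg) (simp_all add: cT_idl cT_idr)
    finally show ?thesis .
  qed
  have RHS: "cT C (BcT (st c) a (AhT c (st b) (BcT a b ?Y))) ?W = cT C (tT C (iT C ?c') ?Om) ?K2'"
    unfolding R0 R1 R2 R3 R4 R5 R6 P2 ..
  have wOm: "wt C ?Om" using wY wW by simp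
  have Pe: "?Om = (tno C ?c ?c', I, snd (snd ?Om))" by (rule triple_eq) simp_all
  have p: "snd (snd ?Om) \<in> hom C (tno C ?c ?c') I" using wOm unfolding wt_def by simp
  have "scal C ?c (snd (snd (cT C (tT C ?Om (iT C ?c)) ?K2))) = scal C ?c' (snd (snd (cT C (tT C (iT C ?c') ?Om) ?K2')))"
    using close_chk[OF p] Pe by simp
  then show ?thesis using arg_cong[OF LHS, of "\<lambda>t. snd (snd t)"] arg_cong[OF RHS, of "\<lambda>t. snd (snd t)"] by simp
qed


section \<open>ABA adjoint to BAB\<close>

definition "rho t = tA (tB (tA t))"
lemma rho_simp[simp]: "rho (a, b, c) = (st b, st a, st c)" by (simp add: rho_def)
lemma rho_inv[simp]: "rho (rho t) = t" by (cases t) simp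
lemma rho_alt: "tB (tA (tB t)) = rho t" by (cases t) simp

lemma ABA_adj: assumes z: "z \<in> Hspace C V" and x: "x \<in> Hspace C V"
  shows "pform C V (opA C V st bb dd (opB C V st bb dd (opA C V st bb dd z))) x
       = pform C V z (opB C V st bb dd (opA C V st bb dd (opB C V st bb dd x)))"
proof -
  let ?A = "opA C V st bb dd" and ?B = "opB C V st bb dd"
  have z1: "?A z \<in> Hspace C V" and z2: "?B (?A z) \<in> Hspace C V" and z3: "?A (?B (?A z)) \<in> Hspace C V"
    using z by (simp_all add: opA_H opB_H)
  have x1: "?B x \<in> Hspace C V" and x2: "?A (?B x) \<in> Hspace C V" and x3: "?B (?A (?B x)) \<in> Hspace C V"
    using x by (simp_all add: opA_H opB_H)
  have cz: "fst (?A (?B (?A z))) u = AC (tA u) (BH (tB (tA u)) (AC (tA (tB (tA u))) (snd z (rho u))))"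
    "snd (?A (?B (?A z))) u = AH (tA u) (BC (tB (tA u)) (AH (tA (tB (tA u))) (fst z (rho u))))" for u
    using opA_comp[OF z2] opB_comp[OF z1] opA_comp[OF z] by (simp_all add: rho_def)
  have cx: "fst (?B (?A (?B x))) v = BC (tB v) (AH (tA (tB v)) (BC (tB (tA (tB v))) (snd x (rho v))))"
    "snd (?B (?A (?B x))) v = BH (tB v) (AC (tA (tB v)) (BH (tB (tA (tB v))) (fst x (rho v))))" for v
    using opB_comp[OF x2] opA_comp[OF x1] opB_comp[OF x] by (simp_all add: rho_alt)
  define S where "S = supp x \<union> rho ` supp x \<union> supp z \<union> rho ` supp z"
  have fS: "finite S" unfolding S_def using HspaceD(3)[OF x] HspaceD(3)[OF z] by simp
  have ii: "rho ` rho ` A = A" for A by (simp add: image_image)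
  have tS: "rho ` S = S" unfolding S_def image_Un ii by blast
  have inj: "inj_on rho S" by (metis rho_inv inj_on_inverseI)
  have sz3: "supp (?A (?B (?A z))) \<subseteq> rho ` supp z"
  proof
    fix u assume "u \<in> supp (?A (?B (?A z)))"
    then have "rho u \<in> supp z" unfolding supp_def cz by (auto simp: AH0 AC0 BH0 BC0)
    then show "u \<in> rho ` supp z" by (metis rho_inv image_eqI)
  qed
  have sx3: "supp (?B (?A (?B x))) \<subseteq> rho ` supp x"
  proof
    fix u assume "u \<in> supp (?B (?A (?B x)))"
    then have "rho u \<in> supp x" unfolding supp_def cx by (auto simp: AH0 AC0 BH0 BC0)
    then show "u \<in> rho ` supp x" by (metis rho_inv image_eqI)
  qed
  have "pform C V (?A (?B (?A z))) x = (\<Sum>u\<in>S. pt (?A (?B (?A z))) x u)"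
    by (rule pform_sum[OF z3 x fS]) (use sz3 in \<open>auto simp: S_def\<close>)
  also have "\<dots> = (\<Sum>u\<in>S. pt z (?B (?A (?B x))) (rho u))"
  proof (rule sum.cong[OF refl])
    fix u assume "u \<in> S"
    obtain a b c where u: "u = (a, b, c)" by (cases u) auto
    have fx: "fst x u \<in> hom C (tno C (V a) (V b)) (V c)" and sx: "snd x u \<in> hom C (V c) (tno C (V a) (V b))"
      using HspaceD(1)[OF x, of u] HspaceD(2)[OF x, of u] u by simp_all
    have fz: "fst z (rho u) \<in> hom C (tno C (V (st b)) (V (st a))) (V (st c))"
      and sz: "snd z (rho u) \<in> hom C (V (st c)) (tno C (V (st b)) (V (st a)))"
      using HspaceD(1)[OF z, of "rho u"] HspaceD(2)[OF z, of "rho u"] u by simp_all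
    show "pt (?A (?B (?A z))) x u = pt z (?B (?A (?B x))) (rho u)"
      unfolding pt_def cz cx using hh_main[OF fx fz] cc_main[OF sx sz] u by (simp add: add.commute)
  qed
  also have "\<dots> = (\<Sum>u\<in>rho ` S. pt z (?B (?A (?B x))) u)" by (rule sum.reindex[OF inj, unfolded comp_def, symmetric])
  also have "\<dots> = (\<Sum>u\<in>S. pt z (?B (?A (?B x))) u)" using tS by simp
  also have "\<dots> = pform C V z (?B (?A (?B x)))"
    by (rule pform_sum[OF z x3 fS, symmetric]) (use sx3 in \<open>auto simp: S_def\<close>)
  finally show ?thesis .
qed

lemma final: assumes tA': "is_transpose C V (opA C V st bb dd) A'" and tB': "is_transpose C V (opB C V st bb dd) B'"
  and x: "x \<in> Hspace C V"
  shows "A' (B' (A' x)) = opB C V st bb dd (opA C V st bb dd (opB C V st bb dd x))"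
proof -
  let ?A = "opA C V st bb dd" and ?B = "opB C V st bb dd"
  have HA: "\<And>y. y \<in> Hspace C V \<Longrightarrow> A' y \<in> Hspace C V" using tA' unfolding is_transpose_def hlinear_def by blast
  have HB: "\<And>y. y \<in> Hspace C V \<Longrightarrow> B' y \<in> Hspace C V" using tB' unfolding is_transpose_def hlinear_def by blast
  have adjA: "\<And>u v. u \<in> Hspace C V \<Longrightarrow> v \<in> Hspace C V \<Longrightarrow> pform C V (?A u) v = pform C V u (A' v)"
    using tA' unfolding is_transpose_def by blast
  have adjB: "\<And>u v. u \<in> Hspace C V \<Longrightarrow> v \<in> Hspace C V \<Longrightarrow> pform C V (?B u) v = pform C V u (B' v)"
    using tB' unfolding is_transpose_def by blast
  have h1: "A' x \<in> Hspace C V" and h2: "B' (A' x) \<in> Hspace C V" and h3: "A' (B' (A' x)) \<in> Hspace C V"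
    using HA HB x by blast+
  have h4: "?B (?A (?B x)) \<in> Hspace C V" using x by (simp add: opA_H opB_H)
  show ?thesis
  proof (rule nondeg[OF h3 h4])
    fix z assume z: "z \<in> Hspace C V"
    have "pform C V z (A' (B' (A' x))) = pform C V (?A z) (B' (A' x))" using adjA[OF z h2] by simp
    also have "\<dots> = pform C V (?B (?A z)) (A' x)" using adjB[OF opA_H[OF z] h1] by simp
    also have "\<dots> = pform C V (?A (?B (?A z))) x" using adjA[OF opB_H[OF opA_H[OF z]] x] by simp
    also have "\<dots> = pform C V z (?B (?A (?B x)))" by (rule ABA_adj[OF z x])
    finally show "pform C V z (A' (B' (A' x))) = pform C V z (?B (?A (?B x)))" .
  qed
qed

end

theorem lemma1p4:
  fixes C :: "('o, 'm::ab_group_add) mcat"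
    and V :: "'i \<Rightarrow> 'o" and st :: "'i \<Rightarrow> 'i" and bb dd :: "'i \<Rightarrow> 'm"
  assumes "smab_cat C"
    and "psi_system C V st bb dd"
  shows "(\<exists>A'. is_transpose C V (opA C V st bb dd) A')
       \<and> (\<exists>B'. is_transpose C V (opB C V st bb dd) B')
       \<and> (\<forall>A' B'. is_transpose C V (opA C V st bb dd) A' \<longrightarrow> is_transpose C V (opB C V st bb dd) B' \<longrightarrow>
            (\<forall>x\<in>Hspace C V. A' (B' (A' x)) = opB C V st bb dd (opA C V st bb dd (opB C V st bb dd x))))"
proof -
  interpret psi C V st bb dd using assms by (rule psi.intro)
  show ?thesis using A_trans B_trans final by blast
qed

end
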